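(* Suppose $K^0\in\mathbb{K}$. For any step size $0<\eta\le\frac12$, the iterates of the Gauss–Newton method $$K^{n+1}_i=K^n_i-2\eta\big(R_i+B_i^T\mathcal{E}_i(P^{K^n})B_i\big)^{-1}L_i^{K^n},\quad i\in\Omega,$$ all lie in $\mathbb{K}$ and satisfy, for all $n\ge0$, $$C(K^n)-C(K^* )\le\Big(1-\frac{2\mu}{\|\mathbf{X}^{K^*}\|_{\max}}\eta\Big)^n\big(C(K^0)-C(K^* )\big).$$
   Context: Let $N_s\ge 1$, $\Omega=\{1,\dots,N_s\}$; tuples $V=(V_1,\dots,V_{N_s})$ of matrices are combined componentwise, $\|V\|_{\max}=\max_i\|V_i\|$ (spectral norm). Markovian jump linear system: $x_{t+1}=A_{\omega(t)}x_t+B_{\omega(t)}u_t$, $A_i\in\mathbb{R}^{d\times d}$, $B_i\in\mathbb{R}^{d\times k}$; $\{\omega(t)\}$ is a time-homogeneous Markov chain on $\Omega$ with transition probabilities $p_{ij}$ and initial distribution $\pi$ with $\pi_i>0$; $x_0$ is random, independent of the chain, with $\mathbb{E}[x_0x_0^T]\succ0$. The system is mean-square stabilizable. $Q=(Q_i)\succ0$, $R=(R_i)\succ0$. For $K=(K_i)$, $K_i\in\mathbb{R}^{k\times d}$, $u_t=-K_{\omega(t)}x_t$ and $C(K)=\mathbb{E}[\sum_{t\ge0}x_t^TQ_{\omega(t)}x_t+u_t^TR_{\omega(t)}u_t]$. $\mathbb{K}$ is the set of $K$ making the closed loop $x_{t+1}=\Gamma_{\omega(t)}x_t$, $\Gamma_i=A_i-B_iK_i$,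 mean-square stable (equivalently $C(K)<\infty$). $K^*$ is the optimal gain minimizing $C$ over $\mathbb{K}$. $\mathcal{E}_i(V)=\sum_jp_{ij}V_j$; $\mathcal{T}_j(V)=\sum_ip_{ij}\Gamma_iV_i\Gamma_i^T$. For $K\in\mathbb{K}$: $P^K$ solves $P_i^K=Q_i+K_i^TR_iK_i+\Gamma_i^T\mathcal{E}_i(P^K)\Gamma_i$; $L_i^K=(R_i+B_i^T\mathcal{E}_i(P^K)B_i)K_i-B_i^T\mathcal{E}_i(P^K)A_i$; $X_i(0)=\mathbb{E}[x_0x_0^T\mathbf{1}\{\omega(0)=i\}]$, $\mathbf{X}^K=\sum_{t\ge0}\mathcal{T}^t(X(0))$. $\mu=\min_i\pi_i\,\sigma_{\min}(\mathbb{E}[x_0x_0^T])$. *)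

theory Defs
  imports "HOL-Analysis.Analysis"
begin

(* Conventions:
   's :: finite  -- the mode set Omega = {1..N_s}
   'n :: finite  -- state index (x_t in R^d, d = CARD('n))
   'm :: finite  -- input index (u_t in R^k, k = CARD('m))
   A :: 's => real^'n^'n,  B :: 's => real^'m^'n,  K :: 's => real^'n^'m,
   Q :: 's => real^'n^'n,  R :: 's => real^'m^'m,
   p :: 's => 's => real   (p i j = transition probability i -> j),
   pi0 :: 's => real       (initial distribution),
   S0 :: real^'n^'n        (S0 = E[x0 x0^T]). *)

definition pos_def_mat :: "real^'n^'n \<Rightarrow> bool" where
  "pos_def_mat M \<longleftrightarrow> transpose M = M \<and> (\<forall>x. x \<noteq> 0 \<longrightarrow> x \<bullet> (M *v x) > 0)"

definition pos_semidef_mat :: "real^'n^'n \<Rightarrow> bool" where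
  "pos_semidef_mat M \<longleftrightarrow> transpose M = M \<and> (\<forall>x. x \<bullet> (M *v x) \<ge> 0)"

definition stochastic_matrix :: "('s::finite \<Rightarrow> 's \<Rightarrow> real) \<Rightarrow> bool" where
  "stochastic_matrix p \<longleftrightarrow> (\<forall>i j. p i j \<ge> 0) \<and> (\<forall>i. (\<Sum>j\<in>UNIV. p i j) = 1)"

definition prob_vector :: "('s::finite \<Rightarrow> real) \<Rightarrow> bool" where
  "prob_vector q \<longleftrightarrow> (\<forall>i. q i \<ge> 0) \<and> (\<Sum>i\<in>UNIV. q i) = 1"

definition closed_loop ::
  "('s \<Rightarrow> real^'n^'n) \<Rightarrow> ('s \<Rightarrow> real^'m^'n) \<Rightarrow> ('s \<Rightarrow> real^'n^'m) \<Rightarrow> 's \<Rightarrow> real^'n^'n" where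
  "closed_loop A B K i = A i - B i ** K i"

(* state transition matrix along a mode path: x_t = Phi w t x_0,
   Phi w t = Gamma_{w(t-1)} ... Gamma_{w(0)} *)
primrec trans_mat :: "('s \<Rightarrow> real^'n^'n) \<Rightarrow> (nat \<Rightarrow> 's) \<Rightarrow> nat \<Rightarrow> real^'n^'n" where
  "trans_mat G w 0 = mat 1"
| "trans_mat G w (Suc t) = G (w t) ** trans_mat G w t"

definition path_prob :: "('s \<Rightarrow> real) \<Rightarrow> ('s \<Rightarrow> 's \<Rightarrow> real) \<Rightarrow> (nat \<Rightarrow> 's) \<Rightarrow> nat \<Rightarrow> real" where
  "path_prob q p w t = q (w 0) * (\<Prod>s<t. p (w s) (w (Suc s)))"

(* E[ x_t^T M_{omega(t)} x_t ] for the closed loop x_{t+1} = G_{omega(t)} x_t, where omega is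
   the Markov chain with initial distribution q and transition matrix p, x_0 is independent
   of the chain with E[x_0 x_0^T] = S.  The expectation over the chain is the finite sum over
   all mode paths of length t+1; given the path, E[x_t^T M x_t] = tr(Phi^T M Phi S). *)
definition quad_expect ::
  "('s::finite \<Rightarrow> real) \<Rightarrow> ('s \<Rightarrow> 's \<Rightarrow> real) \<Rightarrow> real^'n^'n \<Rightarrow> ('s \<Rightarrow> real^'n^'n)
    \<Rightarrow> ('s \<Rightarrow> real^'n^'n) \<Rightarrow> nat \<Rightarrow> real" where
  "quad_expect q p S G M t =
     (\<Sum>w \<in> PiE {..t} (\<lambda>_. UNIV).
        path_prob q p w t * trace (transpose (trans_mat G w t) ** M (w t) ** trans_mat G w t ** S))"

definition mean_square_stable ::
  "('s::finite \<Rightarrow> 's \<Rightarrow> real) \<Rightarrow> ('s \<Rightarrow> real^'n^'n) \<Rightarrow> bool" where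
  "mean_square_stable p G \<longleftrightarrow>
     (\<forall>q S. prob_vector q \<longrightarrow> pos_semidef_mat S \<longrightarrow>
        (\<lambda>t. quad_expect q p S G (\<lambda>_. mat 1) t) \<longlonglongrightarrow> 0)"

definition stabilizing ::
  "('s::finite \<Rightarrow> 's \<Rightarrow> real) \<Rightarrow> ('s \<Rightarrow> real^'n^'n) \<Rightarrow> ('s \<Rightarrow> real^'m^'n) \<Rightarrow> ('s \<Rightarrow> real^'n^'m) set" where
  "stabilizing p A B = {K. mean_square_stable p (closed_loop A B K)}"

(* the cost C(K) = E[ sum_t x_t^T Q x_t + u_t^T R u_t ], u_t = -K x_t
   (meaningful, i.e. a convergent series, for K in \<bbbK>) *)
definition lqr_cost ::
  "('s::finite \<Rightarrow> real) \<Rightarrow> ('s \<Rightarrow> 's \<Rightarrow> real) \<Rightarrow> real^'n^'n \<Rightarrow>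
   ('s \<Rightarrow> real^'n^'n) \<Rightarrow> ('s \<Rightarrow> real^'m^'n) \<Rightarrow> ('s \<Rightarrow> real^'n^'n) \<Rightarrow> ('s \<Rightarrow> real^'m^'m) \<Rightarrow>
   ('s \<Rightarrow> real^'n^'m) \<Rightarrow> real" where
  "lqr_cost q p S A B Q R K =
     (\<Sum>t. quad_expect q p S (closed_loop A B K) (\<lambda>i. Q i + transpose (K i) ** R i ** K i) t)"

definition mode_expect :: "('s::finite \<Rightarrow> 's \<Rightarrow> real) \<Rightarrow> ('s \<Rightarrow> real^'n^'n) \<Rightarrow> 's \<Rightarrow> real^'n^'n" where
  "mode_expect p V i = (\<Sum>j\<in>UNIV. p i j *\<^sub>R V j)"

definition T_op :: "('s::finite \<Rightarrow> 's \<Rightarrow> real) \<Rightarrow> ('s \<Rightarrow> real^'n^'n) \<Rightarrow> ('s \<Rightarrow> real^'n^'n) \<Rightarrow> 's \<Rightarrow> real^'n^'n" where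
  "T_op p G V j = (\<Sum>i\<in>UNIV. p i j *\<^sub>R (G i ** V i ** transpose (G i)))"

definition P_mat ::
  "('s::finite \<Rightarrow> 's \<Rightarrow> real) \<Rightarrow> ('s \<Rightarrow> real^'n^'n) \<Rightarrow> ('s \<Rightarrow> real^'m^'n) \<Rightarrow> ('s \<Rightarrow> real^'n^'n)
    \<Rightarrow> ('s \<Rightarrow> real^'m^'m) \<Rightarrow> ('s \<Rightarrow> real^'n^'m) \<Rightarrow> 's \<Rightarrow> real^'n^'n" where
  "P_mat p A B Q R K = (THE P. \<forall>i. P i = Q i + transpose (K i) ** R i ** K i
      + transpose (closed_loop A B K i) ** mode_expect p P i ** closed_loop A B K i)"

definition L_mat ::
  "('s::finite \<Rightarrow> 's \<Rightarrow> real) \<Rightarrow> ('s \<Rightarrow> real^'n^'n) \<Rightarrow> ('s \<Rightarrow> real^'m^'n) \<Rightarrow> ('s \<Rightarrow> real^'n^'n)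
    \<Rightarrow> ('s \<Rightarrow> real^'m^'m) \<Rightarrow> ('s \<Rightarrow> real^'n^'m) \<Rightarrow> 's \<Rightarrow> real^'n^'m" where
  "L_mat p A B Q R K i =
     (R i + transpose (B i) ** mode_expect p (P_mat p A B Q R K) i ** B i) ** K i
     - transpose (B i) ** mode_expect p (P_mat p A B Q R K) i ** A i"

(* X_i(0) = E[x0 x0^T 1{omega(0)=i}] = pi_i E[x0 x0^T]  (x0 independent of the chain) *)
definition X0 :: "('s \<Rightarrow> real) \<Rightarrow> real^'n^'n \<Rightarrow> 's \<Rightarrow> real^'n^'n" where
  "X0 q S i = q i *\<^sub>R S"

definition X_bold ::
  "('s::finite \<Rightarrow> real) \<Rightarrow> ('s \<Rightarrow> 's \<Rightarrow> real) \<Rightarrow> real^'n^'n \<Rightarrow>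
   ('s \<Rightarrow> real^'n^'n) \<Rightarrow> ('s \<Rightarrow> real^'m^'n) \<Rightarrow> ('s \<Rightarrow> real^'n^'m) \<Rightarrow> 's \<Rightarrow> real^'n^'n" where
  "X_bold q p S A B K i = (\<Sum>t. ((T_op p (closed_loop A B K) ^^ t) (X0 q S)) i)"

definition spec_norm :: "real^'a^'b \<Rightarrow> real" where
  "spec_norm M = onorm (\<lambda>x. M *v x)"

definition max_norm :: "('s::finite \<Rightarrow> real^'a^'b) \<Rightarrow> real" where
  "max_norm V = Max (range (\<lambda>i. spec_norm (V i)))"

definition sigma_min :: "real^'n^'n \<Rightarrow> real" where
  "sigma_min M = Inf {norm (M *v x) | x. norm x = 1}"

definition mu_const :: "('s::finite \<Rightarrow> real) \<Rightarrow> real^'n^'n \<Rightarrow> real" where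
  "mu_const q S = Min (range q) * sigma_min S"

definition gn_step ::
  "('s::finite \<Rightarrow> 's \<Rightarrow> real) \<Rightarrow> ('s \<Rightarrow> real^'n^'n) \<Rightarrow> ('s \<Rightarrow> real^'m^'n) \<Rightarrow> ('s \<Rightarrow> real^'n^'n)
    \<Rightarrow> ('s \<Rightarrow> real^'m^'m) \<Rightarrow> real \<Rightarrow> ('s \<Rightarrow> real^'n^'m) \<Rightarrow> 's \<Rightarrow> real^'n^'m" where
  "gn_step p A B Q R \<eta> K i =
     K i - (2 * \<eta>) *\<^sub>R (matrix_inv (R i + transpose (B i) ** mode_expect p (P_mat p A B Q R K) i ** B i)
                         ** L_mat p A B Q R K i)"

end

theory Submission
  imports Defs
begin

definition qf :: "real^'n^'n \<Rightarrow> real^'n \<Rightarrow> real" where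
  "qf M x = x \<bullet> (M *v x)"

lemma matrix_add_rdistrib: "((A::real^'n^'m) + B) ** C = A ** C + B ** C"
  by (vector matrix_matrix_mult_def sum.distrib distrib_right)

lemma matrix_sub_ldistrib: "(A::real^'n^'m) ** (B - C) = A ** B - A ** C"
  by (vector matrix_matrix_mult_def sum_subtractf right_diff_distrib)

lemma matrix_sub_rdistrib: "((A::real^'n^'m) - B) ** C = A ** C - B ** C"
  by (vector matrix_matrix_mult_def sum_subtractf left_diff_distrib)

lemma matrix_sum_ldistrib:
  fixes A :: "real^'n^'m"
  shows "A ** (\<Sum>i\<in>I. f i) = (\<Sum>i\<in>I. A ** f i)"
  by (induction I rule: infinite_finite_induct) (auto simp: matrix_add_ldistrib)

lemma matrix_sum_rdistrib:
  fixes A :: "real^'n^'m"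
  shows "(\<Sum>i\<in>I. f i) ** A = (\<Sum>i\<in>I. f i ** A)"
  by (induction I rule: infinite_finite_induct) (auto simp: matrix_add_rdistrib)

lemma trace_sum: "trace (\<Sum>i\<in>I. (f i :: real^'n^'n)) = (\<Sum>i\<in>I. trace (f i))"
  by (induction I rule: infinite_finite_induct) (auto simp: trace_add trace_0[simplified])

lemma trace_scaleR: "trace (c *\<^sub>R (A::real^'n^'n)) = c * trace A"
  by (simp add: trace_def sum_distrib_left)

lemma transpose_add: "transpose ((A::real^'n^'m) + B) = transpose A + transpose B"
  by (vector transpose_def)

lemma transpose_diff: "transpose ((A::real^'n^'m) - B) = transpose A - transpose B"
  by (vector transpose_def)

lemma transpose_sum: "transpose (\<Sum>i\<in>I. (f i :: real^'n^'m)) = (\<Sum>i\<in>I. transpose (f i))"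
  by (induction I rule: infinite_finite_induct) (auto simp: transpose_add transpose_def vec_eq_iff)

lemma dot_transpose: "x \<bullet> (transpose G *v y) = (G *v x) \<bullet> (y::real^'m)"
  by (metis dot_lmul_matrix inner_commute transpose_matrix_vector vector_transpose_matrix)

lemma qf_congr: "qf (transpose G ** M ** G) x = qf M (G *v x)"
  unfolding qf_def
  by (metis dot_transpose matrix_vector_mul_assoc)

lemma qf_add: "qf (A + B) x = qf A x + qf B x"
  by (simp add: qf_def matrix_vector_mult_add_rdistrib inner_add_right)
lemma qf_diff: "qf (A - B) x = qf A x - qf B x"
  by (simp add: qf_def matrix_vector_mult_diff_rdistrib inner_diff_right)
lemma scaleR_mv: "(c *\<^sub>R (A::real^'n^'m)) *v x = c *\<^sub>R (A *v x)"
  by (vector matrix_vector_mult_def sum_distrib_left mult.assoc)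
lemma qf_scaleR: "qf (c *\<^sub>R A) x = c * qf A x"
  by (simp add: qf_def scaleR_mv)
lemma qf_sum: "qf (\<Sum>i\<in>I. f i) x = (\<Sum>i\<in>I. qf (f i) x)"
  by (induction I rule: infinite_finite_induct) (simp_all add: qf_add qf_def[where M=0])
lemma qf_mat1: "qf (mat 1) x = norm x ^ 2"
  by (simp add: qf_def power2_norm_eq_inner)


lemma qf_add_vec: "qf M (x + y) = qf M x + x \<bullet> (M *v y) + y \<bullet> (M *v x) + qf M y"
  by (simp add: qf_def matrix_vector_right_distrib inner_add_left inner_add_right)

lemma qf_scale_vec: "qf M (c *\<^sub>R x) = c^2 * qf M x"
  by (simp add: qf_def matrix_vector_mult_scaleR power2_eq_square)

lemma sym_dot: "transpose M = M \<Longrightarrow> x \<bullet> (M *v y) = y \<bullet> (M *v (x::real^'n))"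
  by (metis dot_transpose inner_commute)

lemma psd_iff: "pos_semidef_mat M \<longleftrightarrow> transpose M = M \<and> (\<forall>x. 0 \<le> qf M x)"
  by (simp add: pos_semidef_mat_def qf_def)

lemma pd_iff: "pos_def_mat M \<longleftrightarrow> transpose M = M \<and> (\<forall>x. x \<noteq> 0 \<longrightarrow> 0 < qf M x)"
  by (simp add: pos_def_mat_def qf_def)

lemma pd_psd: "pos_def_mat M \<Longrightarrow> pos_semidef_mat M"
  unfolding pd_iff psd_iff by (metis order_less_imp_le order_refl qf_def inner_zero_left)

lemma psd_kernel:
  fixes A :: "real^'n^'n"
  assumes sym: "transpose A = A" and nn: "\<forall>x. 0 \<le> qf A x" and z: "qf A x = 0"
  shows "A *v x = 0"
proof -
  have key: "y \<bullet> (A *v x) = 0" for y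
  proof (rule ccontr)
    assume ne: "y \<bullet> (A *v x) \<noteq> 0"
    define b where "b = y \<bullet> (A *v x)"
    define c where "c = qf A y"
    have c0: "c \<ge> 0" using nn c_def by auto
    define t where "t = - b / (c + 1)"
    have "qf A (x + t *\<^sub>R y) = 2 * t * b + t^2 * c"
      using sym_dot[OF sym, of x y] z
      by (simp add: qf_add_vec qf_scale_vec b_def c_def matrix_vector_mult_scaleR algebra_simps)
    also have "\<dots> < 0"
    proof -
      define d where "d = c + 1"
      have c1: "d > 0" using c0 d_def by simp
      have td: "t = - b / d" by (simp add: t_def d_def)
      have "t^2 * c \<le> t^2 * d" by (simp add: mult_left_mono d_def)
      also have "t^2 * d = b^2 / d" using c1 by (simp add: td power2_eq_square field_simps)
      finally have e0: "t^2 * c \<le> b^2/d" .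
      have e1: "2 * t * b = - 2 * b^2/d" by (simp add: td power2_eq_square)
      have "2 * t * b + t^2 * c \<le> - 2 * b^2/d + b^2/d" using e0 e1 by linarith
      also have "\<dots> = - (b^2/d)" by simp
      also have "\<dots> < 0" using ne c1 b_def by simp
      finally show ?thesis .
    qed
    finally show False using nn by (metis not_le)
  qed
  show ?thesis using key[of "A *v x"] by simp
qed

definition outer :: "real^'n \<Rightarrow> real^'n \<Rightarrow> real^'n^'n" where
  "outer v w = (\<chi> i j. v$i * w$j)"

lemma outer_mv: "outer v w *v x = (w \<bullet> x) *\<^sub>R v"
  by (vector outer_def matrix_vector_mult_def inner_vec_def sum_distrib_left mult.commute mult.left_commute)

lemma qf_outer: "qf (outer v v) x = (v \<bullet> x)^2"
  by (simp add: qf_def outer_mv power2_eq_square inner_commute)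

lemma transpose_outer: "transpose (outer v v) = outer v v"
  by (vector outer_def transpose_def mult.commute)

lemma trace_outer_mult: "trace (Y ** outer v v) = qf Y v"
  by (simp add: trace_def qf_def outer_def matrix_matrix_mult_def matrix_vector_mult_def inner_vec_def
      sum_distrib_left sum_distrib_right mult_ac)

lemma trace_outer: "trace (outer v v) = norm v ^ 2"
proof -
  have "trace (outer v v) = v \<bullet> v" by (simp add: trace_def outer_def inner_vec_def)
  then show ?thesis by (simp add: power2_norm_eq_inner)
qed

lemma trace_zero [simp]: "trace (0::real^'n^'n) = 0"
  by (simp add: trace_def)

lemma outer_scale: "outer (r *\<^sub>R v) (r *\<^sub>R v) = (r^2) *\<^sub>R outer v v"
  by (vector outer_def power2_eq_square)

abbreviation gsum :: "(real^'n) list \<Rightarrow> real^'n^'n" where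
  "gsum vs \<equiv> sum_list (map (\<lambda>v. outer v v) vs)"

lemma trace_gsum_mult: "trace (Y ** gsum vs) = (\<Sum>v\<leftarrow>vs. qf Y v)"
  by (induction vs) (auto simp: matrix_add_ldistrib trace_add trace_outer_mult)

lemma trace_gsum: "trace (gsum vs) = (\<Sum>v\<leftarrow>vs. norm v ^ 2)"
  using trace_gsum_mult[of "mat 1" vs] by (simp add: qf_mat1)

lemma gram_aux:
  "\<forall>N::real^'n^'n. card {j. N$j \<noteq> 0} = k \<longrightarrow> pos_semidef_mat N \<longrightarrow> (\<exists>vs. N = gsum vs)"
proof (induction k rule: less_induct)
  case (less k)
  show ?case
  proof (intro allI impI)
    fix N :: "real^'n^'n"
    assume ck: "card {j. N$j \<noteq> 0} = k" and psd: "pos_semidef_mat N"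
    have sym: "transpose N = N" and nn: "\<forall>x. 0 \<le> qf N x" using psd psd_iff by auto
    have symc: "N$i$j = N$j$i" for i j
      using sym by (metis transpose_def vec_lambda_beta)
    show "\<exists>vs. N = gsum vs"
    proof (cases "{j. N$j \<noteq> 0} = {}")
      case True
      then have "N = 0" by (auto simp: vec_eq_iff)
      then show ?thesis by (intro exI[of _ "[]"]) simp
    next
      case False
      then obtain j where j: "N$j \<noteq> 0" by auto
      define e :: "real^'n" where "e = axis j 1"
      define c where "c = N *v e"
      have ce: "c = N$j"
        by (simp add: c_def e_def vec_eq_iff matrix_vector_mult_def axis_def symc
            if_distrib if_distribR sum.delta cong: if_cong)
      define a where "a = qf N e"
      have a_eq: "a = c $ j" by (simp add: a_def qf_def c_def e_def inner_axis')
      have a_pos: "a > 0"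
      proof -
        have "a \<ge> 0" using nn a_def by auto
        moreover have "a \<noteq> 0"
        proof
          assume "a = 0"
          then have "N *v e = 0" using psd_kernel[OF sym nn] a_def by auto
          then show False using ce c_def j by simp
        qed
        ultimately show ?thesis by simp
      qed
      define N' where "N' = N - (1/a) *\<^sub>R outer c c"
      have qfN': "qf N' x = qf N (x - ((c \<bullet> x)/a) *\<^sub>R e)" for x
      proof -
        define s where "s = (c \<bullet> x)/a"
        define r where "r = - s"
        have h1: "x \<bullet> (N *v e) = c \<bullet> x" by (simp add: c_def inner_commute)
        have h2: "e \<bullet> (N *v x) = c \<bullet> x" using sym_dot[OF sym, of x e] h1 by simp
        have "qf N (x - ((c \<bullet> x)/a) *\<^sub>R e) = qf N (x + r *\<^sub>R e)" by (simp add: s_def r_def)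
        also have "\<dots> = qf N x + x \<bullet> (N *v (r *\<^sub>R e)) + (r *\<^sub>R e) \<bullet> (N *v x) + qf N (r *\<^sub>R e)"
          by (rule qf_add_vec)
        also have "\<dots> = qf N x + r * (x \<bullet> (N *v e)) + r * (e \<bullet> (N *v x)) + r^2 * a"
          by (simp add: matrix_vector_mult_scaleR qf_scale_vec a_def)
        also have "\<dots> = qf N x - 2 * ((c \<bullet> x)/a) * (c \<bullet> x) + ((c \<bullet> x)/a)^2 * a"
          by (simp add: h1 h2 s_def r_def power2_eq_square)
        also have "\<dots> = qf N x - (c \<bullet> x)^2 / a"
          using a_pos by (simp add: field_simps power2_eq_square)
        finally show ?thesis
          by (simp add: N'_def qf_diff qf_scaleR qf_outer)
      qed
      have psd': "pos_semidef_mat N'"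
        unfolding psd_iff
        using nn qfN' sym by (auto simp: N'_def transpose_diff transpose_scalar transpose_outer)
      have sub: "{i. N'$i \<noteq> 0} \<subseteq> {i. N$i \<noteq> 0} - {j}"
      proof
        fix i assume i: "i \<in> {i. N'$i \<noteq> 0}"
        have rowi: "N'$i = N$i - ((1/a) * c$i) *\<^sub>R c"
          by (simp add: N'_def outer_def vec_eq_iff)
        have "c$i = N$i$j" using ce symc by simp
        moreover have "N'$j = 0"
          using a_pos by (simp add: N'_def outer_def vec_eq_iff ce[symmetric] a_eq[symmetric])
        ultimately show "i \<in> {i. N$i \<noteq> 0} - {j}"
          using i rowi by auto
      qed
      have "card {i. N'$i \<noteq> 0} < k"
      proof -
        have "card {i. N'$i \<noteq> 0} \<le> card ({i. N$i \<noteq> 0} - {j})"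
          by (rule card_mono[OF _ sub]) simp
        also have "\<dots> < k"
        proof -
          have "k > 0" using ck j by (auto simp: card_gt_0_iff)
          then show ?thesis using ck j by simp
        qed
        finally show ?thesis .
      qed
      then obtain vs where vs: "N' = gsum vs" using less psd' by blast
      define v where "v = (1 / sqrt a) *\<^sub>R c"
      have "outer v v = (1/a) *\<^sub>R outer c c"
        using a_pos by (simp add: v_def outer_scale power_divide)
      then have "N = gsum (v # vs)" using vs unfolding N'_def by (simp add: algebra_simps)
      then show ?thesis by blast
    qed
  qed
qed

lemma gram: "pos_semidef_mat (N::real^'n^'n) \<Longrightarrow> \<exists>vs. N = gsum vs"
  using gram_aux by blast

lemma qf_gsum: "qf (gsum vs) x = (\<Sum>v\<leftarrow>vs. (v \<bullet> x)^2)"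
  by (induction vs) (simp_all add: qf_add qf_outer qf_def[where M=0])

lemma trace_mult_lower:
  assumes "pos_semidef_mat N" "\<And>x. c * norm x ^ 2 \<le> qf Y x"
  shows "c * trace N \<le> trace (Y ** N)"
proof -
  obtain vs where N: "N = gsum vs" using gram assms(1) by blast
  have "c * (\<Sum>v\<leftarrow>vs. norm v ^ 2) \<le> (\<Sum>v\<leftarrow>vs. qf Y v)"
    by (induction vs) (auto simp: distrib_left intro: add_mono assms(2))
  then show ?thesis by (simp add: N trace_gsum_mult trace_gsum)
qed

lemma trace_mult_upper:
  assumes "pos_semidef_mat N" "\<And>x. qf Y x \<le> c * norm x ^ 2"
  shows "trace (Y ** N) \<le> c * trace N"
proof -
  obtain vs where N: "N = gsum vs" using gram assms(1) by blast
  have "(\<Sum>v\<leftarrow>vs. qf Y v) \<le> c * (\<Sum>v\<leftarrow>vs. norm v ^ 2)"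
    by (induction vs) (auto simp: distrib_left intro: add_mono assms(2))
  then show ?thesis by (simp add: N trace_gsum_mult trace_gsum)
qed

lemma trace_psd_nonneg: "pos_semidef_mat N \<Longrightarrow> 0 \<le> trace N"
  using trace_mult_lower[of N 0 "mat 1"] by (simp add: qf_mat1)

lemma trace_mult_psd_nonneg:
  "pos_semidef_mat N \<Longrightarrow> (\<And>x. 0 \<le> qf Y x) \<Longrightarrow> 0 \<le> trace (Y ** N)"
  using trace_mult_lower[of N 0 Y] by simp

lemma qf_le_trace:
  assumes "pos_semidef_mat N"
  shows "qf N x \<le> trace N * norm x ^ 2"
proof -
  obtain vs where N: "N = gsum vs" using gram assms(1) by blast
  have cs: "(v \<bullet> x)^2 \<le> norm v ^ 2 * norm x ^ 2" for v
  proof -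
    have "\<bar>v \<bullet> x\<bar> \<le> norm v * norm x" by (rule Cauchy_Schwarz_ineq2)
    then have "\<bar>v \<bullet> x\<bar>^2 \<le> (norm v * norm x)^2" by (intro power_mono) auto
    then show ?thesis by (simp add: power_mult_distrib)
  qed
  have "(\<Sum>v\<leftarrow>vs. (v \<bullet> x)^2) \<le> (\<Sum>v\<leftarrow>vs. norm v ^ 2) * norm x ^ 2"
    by (induction vs) (auto simp: distrib_right intro: add_mono cs)
  then show ?thesis by (simp add: N qf_gsum trace_gsum)
qed

lemma qf_min:
  fixes M :: "real^'n^'n"
  shows "\<exists>l. (\<forall>x. l * norm x ^ 2 \<le> qf M x) \<and> (\<exists>x0. norm x0 = 1 \<and> qf M x0 = l)"
proof -
  have cont: "continuous_on (sphere 0 1) (\<lambda>x. qf M x)"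
    unfolding qf_def by (intro continuous_intros)
  obtain i :: 'n where True by auto
  have ne: "sphere (0::real^'n) 1 \<noteq> {}"
    using norm_axis_1[of i] by (metis dist_0_norm empty_iff mem_sphere)
  obtain x0 where x0: "x0 \<in> sphere 0 1" and mn: "\<forall>y\<in>sphere 0 1. qf M x0 \<le> qf M y"
    using continuous_attains_inf[OF compact_sphere ne cont] by blast
  have n0: "norm x0 = 1" using x0 by simp
  have "qf M x0 * norm x ^ 2 \<le> qf M x" for x
  proof (cases "x = 0")
    case True then show ?thesis by (simp add: qf_def)
  next
    case False
    define u where "u = (1 / norm x) *\<^sub>R x"
    have "norm u = 1" using False by (simp add: u_def)
    then have "qf M x0 \<le> qf M u" using mn by simp
    moreover have "x = norm x *\<^sub>R u" using False by (simp add: u_def)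
    then have "qf M x = norm x ^ 2 * qf M u" by (metis qf_scale_vec)
    ultimately show ?thesis by (simp add: mult.commute mult_right_mono)
  qed
  then show ?thesis using n0 by blast
qed

lemma pd_lower:
  assumes "pos_def_mat M"
  shows "\<exists>l>0. \<forall>x. l * norm x ^ 2 \<le> qf M x"
proof -
  obtain l x0 where l: "\<forall>x. l * norm x ^ 2 \<le> qf M x" and x0: "norm x0 = 1" "qf M x0 = l"
    using qf_min by blast
  have "x0 \<noteq> 0" using x0 by auto
  then have "l > 0" using assms x0 by (auto simp: pd_iff)
  then show ?thesis using l by blast
qed

lemma sigma_min_nonneg: "0 \<le> sigma_min (S::real^'n^'n)"
proof -
  obtain i :: 'n where True by auto
  show ?thesis
    unfolding sigma_min_def
    by (rule cInf_greatest) (use norm_axis_1[of i] in blast, auto)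
qed

lemma sigma_min_bound:
  fixes S :: "real^'n^'n"
  assumes "pos_semidef_mat S"
  shows "sigma_min S * norm x ^ 2 \<le> qf S x"
proof -
  obtain l x0 where l: "\<forall>x. l * norm x ^ 2 \<le> qf S x" and x0: "norm x0 = 1" "qf S x0 = l"
    using qf_min by blast
  have sym: "transpose S = S" using assms psd_iff by auto
  define A where "A = S - l *\<^sub>R mat 1"
  have symA: "transpose A = A" by (simp add: A_def transpose_diff transpose_scalar sym)
  have nnA: "\<forall>x. 0 \<le> qf A x" using l by (simp add: A_def qf_diff qf_scaleR qf_mat1)
  have "qf A x0 = 0" using x0 by (simp add: A_def qf_diff qf_scaleR qf_mat1)
  then have "A *v x0 = 0" using psd_kernel[OF symA nnA] by simp
  then have Sx0: "S *v x0 = l *\<^sub>R x0"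
    by (simp add: A_def matrix_vector_mult_diff_rdistrib scaleR_mv)
  have l0: "l \<ge> 0" using assms x0 by (auto simp: psd_iff)
  have "sigma_min S \<le> norm (S *v x0)"
    unfolding sigma_min_def
    by (rule cInf_lower) (use x0 in \<open>auto intro!: bdd_belowI[of _ 0]\<close>)
  also have "\<dots> = l" using Sx0 x0 l0 by simp
  finally have "sigma_min S * norm x ^ 2 \<le> l * norm x ^ 2" by (simp add: mult_right_mono)
  then show ?thesis using l by (meson order_trans)
qed

lemma qf_le_spec: "qf M x \<le> spec_norm M * norm x ^ 2"
proof -
  have "qf M x \<le> norm x * norm (M *v x)" unfolding qf_def by (rule norm_cauchy_schwarz)
  also have "norm (M *v x) \<le> spec_norm M * norm x"
    unfolding spec_norm_def by (rule onorm[OF matrix_vector_mul_bounded_linear])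
  then have "norm x * norm (M *v x) \<le> norm x * (spec_norm M * norm x)" by (simp add: mult_left_mono)
  finally show ?thesis by (simp add: power2_eq_square mult_ac)
qed

lemma bilin_bound: "\<bar>x \<bullet> (M *v y)\<bar> \<le> onorm ((*v) (M::real^'n^'n)) * norm x * norm y"
proof -
  have "\<bar>x \<bullet> (M *v y)\<bar> \<le> norm x * norm (M *v y)" by (rule Cauchy_Schwarz_ineq2)
  also have "norm (M *v y) \<le> onorm ((*v) M) * norm y" by (rule onorm[OF matrix_vector_mul_bounded_linear])
  then have "norm x * norm (M *v y) \<le> norm x * (onorm ((*v) M) * norm y)" by (simp add: mult_left_mono)
  finally show ?thesis by (simp add: mult_ac)
qed

definition Lam :: "('s::finite \<Rightarrow> 's \<Rightarrow> real) \<Rightarrow> ('s \<Rightarrow> real^'n^'n) \<Rightarrow> ('s \<Rightarrow> real^'n^'n) \<Rightarrow> 's \<Rightarrow> real^'n^'n" where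
  "Lam p G V i = transpose (G i) ** mode_expect p V i ** G i"

definition ip :: "('s::finite \<Rightarrow> real^'n^'n) \<Rightarrow> ('s \<Rightarrow> real^'n^'n) \<Rightarrow> real" where
  "ip V W = (\<Sum>i\<in>UNIV. trace (V i ** W i))"

lemma trace_lin2: "trace (X ** (\<Sum>y\<in>I. c y *\<^sub>R M y)) = (\<Sum>y\<in>I. c y * trace (X ** (M y :: real^'n^'n)))"
  by (simp add: matrix_sum_ldistrib trace_sum matrix_scalar_ac scalar_matrix_assoc[symmetric] trace_scaleR)

lemma trace_lin1: "trace ((\<Sum>y\<in>I. c y *\<^sub>R M y) ** X) = (\<Sum>y\<in>I. c y * trace ((M y :: real^'n^'n) ** X))"
  by (simp add: matrix_sum_rdistrib trace_sum scalar_matrix_assoc[symmetric] trace_scaleR)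

lemma trace_cyc: "trace ((X::real^'n^'n) ** S ** Y) = trace (S ** (Y ** X))"
proof -
  have "trace (X ** S ** Y) = trace (X ** (S ** Y))" by (simp add: matrix_mul_assoc)
  also have "\<dots> = trace ((S ** Y) ** X)" by (rule trace_mul_sym)
  also have "\<dots> = trace (S ** (Y ** X))" by (simp add: matrix_mul_assoc)
  finally show ?thesis .
qed

lemma trace_lin: "trace ((X::real^'n^'n) ** (\<Sum>y\<in>I. c y *\<^sub>R M y) ** Y) = (\<Sum>y\<in>I. c y * trace (X ** (M y :: real^'n^'n) ** Y))"
  by (simp add: trace_cyc trace_lin1)

lemma qf_Lam: "qf (Lam p G V i) x = (\<Sum>j\<in>UNIV. p i j * qf (V j) (G i *v x))"
  by (simp add: Lam_def qf_congr mode_expect_def qf_sum qf_scaleR)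

lemma Lam_mono:
  assumes "\<forall>i j. p i j \<ge> 0" "\<And>j y. qf (V j) y \<le> qf (W j) y"
  shows "qf (Lam p G V i) x \<le> qf (Lam p G W i) x"
  unfolding qf_Lam by (intro sum_mono mult_left_mono assms(2)) (use assms(1) in auto)

lemma Lam_nonneg:
  assumes "\<forall>i j. p i j \<ge> 0" "\<And>j y. 0 \<le> qf (V j) y"
  shows "0 \<le> qf (Lam p G V i) x"
  unfolding qf_Lam by (intro sum_nonneg mult_nonneg_nonneg assms(2)) (use assms(1) in auto)

lemma Lam_transpose: "transpose (Lam p G V i) = Lam p G (\<lambda>j. transpose (V j)) i"
  by (simp add: Lam_def matrix_transpose_mul matrix_mul_assoc mode_expect_def transpose_sum transpose_scalar)

lemma Lam_add: "Lam p G (\<lambda>j. V j + W j) i = Lam p G V i + Lam p G W i"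
  by (simp add: Lam_def mode_expect_def scaleR_add_right sum.distrib matrix_add_ldistrib matrix_add_rdistrib)

lemma Lam_diff: "Lam p G (\<lambda>j. V j - W j) i = Lam p G V i - Lam p G W i"
  by (simp add: Lam_def mode_expect_def scaleR_diff_right sum_subtractf matrix_sub_ldistrib matrix_sub_rdistrib)

lemma Lam_scale: "Lam p G (\<lambda>j. c *\<^sub>R V j) i = c *\<^sub>R Lam p G V i"
proof -
  have "mode_expect p (\<lambda>j. c *\<^sub>R V j) i = c *\<^sub>R mode_expect p V i"
    by (simp add: mode_expect_def scaleR_sum_right mult.commute)
  then show ?thesis by (simp add: Lam_def matrix_scalar_ac scalar_matrix_assoc)
qed

lemma Lam_zero: "Lam p G (\<lambda>j. 0) i = 0"
  by (simp add: Lam_def mode_expect_def)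

lemma duality: "ip (Lam p G M) V = ip M (T_op p G V)"
proof -
  have "ip (Lam p G M) V = (\<Sum>i\<in>UNIV. \<Sum>j\<in>UNIV. p i j * trace (M j ** (G i ** V i ** transpose (G i))))"
  proof -
    have "trace (Lam p G M i ** V i) = (\<Sum>j\<in>UNIV. p i j * trace (M j ** (G i ** V i ** transpose (G i))))" for i
    proof -
      have "trace (Lam p G M i ** V i) = trace (transpose (G i) ** mode_expect p M i ** (G i ** V i))"
        by (simp add: Lam_def matrix_mul_assoc)
      also have "\<dots> = (\<Sum>j\<in>UNIV. p i j * trace (transpose (G i) ** M j ** (G i ** V i)))"
        unfolding mode_expect_def by (rule trace_lin)
      also have "\<dots> = (\<Sum>j\<in>UNIV. p i j * trace (M j ** (G i ** V i ** transpose (G i))))"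
      proof (intro sum.cong refl arg_cong[where f="\<lambda>t. p i _ * t"])
        fix j
        have "trace (transpose (G i) ** M j ** (G i ** V i)) = trace (transpose (G i) ** (M j ** (G i ** V i)))"
          by (simp add: matrix_mul_assoc)
        also have "\<dots> = trace ((M j ** (G i ** V i)) ** transpose (G i))" by (rule trace_mul_sym)
        also have "(M j ** (G i ** V i)) ** transpose (G i) = M j ** (G i ** V i ** transpose (G i))"
          by (simp add: matrix_mul_assoc)
        finally show "trace (transpose (G i) ** M j ** (G i ** V i)) = trace (M j ** (G i ** V i ** transpose (G i)))" .
      qed
      finally show ?thesis .
    qed
    then show ?thesis by (simp add: ip_def)
  qed
  also have "\<dots> = (\<Sum>j\<in>UNIV. \<Sum>i\<in>UNIV. p i j * trace (M j ** (G i ** V i ** transpose (G i))))"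
    by (rule sum.swap)
  also have "\<dots> = ip M (T_op p G V)"
    unfolding ip_def T_op_def trace_lin2 ..
  finally show ?thesis .
qed

lemma ip_add2: "ip M (\<lambda>i. V i + W i) = ip M V + ip M W"
  by (simp add: ip_def matrix_add_ldistrib trace_add sum.distrib)
lemma ip_diff1: "ip (\<lambda>i. V i - W i) M = ip V M - ip W M"
  by (simp add: ip_def matrix_sub_rdistrib trace_sub sum_subtractf)
lemma ip_add1: "ip (\<lambda>i. V i + W i) M = ip V M + ip W M"
  by (simp add: ip_def matrix_add_rdistrib trace_add sum.distrib)

lemma trans_mat_cong: "(\<forall>s<t. w s = w' s) \<Longrightarrow> trans_mat G w t = trans_mat G w' t"
  by (induction t) auto

lemma quad_expect_Suc:
  fixes G M :: "'s::finite \<Rightarrow> real^'n^'n"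
  shows "quad_expect q p S G M (Suc t) = quad_expect q p S G (Lam p G M) t"
proof -
  define F where "F = (\<lambda>w. path_prob q p w (Suc t) * trace (transpose (trans_mat G w (Suc t)) ** M (w (Suc t)) ** trans_mat G w (Suc t) ** S))"
  define H where "H = (\<lambda>(y::'s, g::nat \<Rightarrow> 's). g(Suc t := y))"
  have PE: "PiE {..Suc t} (\<lambda>_. UNIV::'s set) = H ` (UNIV \<times> PiE {..t} (\<lambda>_. UNIV))"
    unfolding H_def by (simp add: atMost_Suc PiE_insert_eq)
  have inj: "inj_on H (UNIV \<times> PiE {..t} (\<lambda>_. UNIV::'s set))"
    unfolding H_def by (rule inj_combinator) simp
  have "quad_expect q p S G M (Suc t) = sum F (PiE {..Suc t} (\<lambda>_. UNIV))"
    by (simp add: quad_expect_def F_def)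
  also have "\<dots> = (\<Sum>z\<in>UNIV \<times> PiE {..t} (\<lambda>_. UNIV). F (H z))"
    unfolding PE by (rule sum.reindex[OF inj, unfolded comp_def])
  also have "\<dots> = (\<Sum>y\<in>UNIV. \<Sum>g\<in>PiE {..t} (\<lambda>_. UNIV). F (g(Suc t := y)))"
    by (simp add: sum.cartesian_product H_def split_def)
  also have "\<dots> = (\<Sum>g\<in>PiE {..t} (\<lambda>_. UNIV). \<Sum>y\<in>UNIV. F (g(Suc t := y)))"
    by (rule sum.swap)
  also have "\<dots> = (\<Sum>g\<in>PiE {..t} (\<lambda>_. UNIV). path_prob q p g t *
        trace (transpose (trans_mat G g t) ** Lam p G M (g t) ** trans_mat G g t ** S))"
  proof (rule sum.cong[OF refl])
    fix g :: "nat \<Rightarrow> 's"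
    define Phi where "Phi = trans_mat G g t"
    define Hm where "Hm = G (g t)"
    have pp: "path_prob q p (g(Suc t := y)) (Suc t) = path_prob q p g t * p (g t) y" for y
    proof -
      have "(\<Prod>s<t. p ((g(Suc t := y)) s) ((g(Suc t := y)) (Suc s))) = (\<Prod>s<t. p (g s) (g (Suc s)))"
        by (rule prod.cong) auto
      then show ?thesis by (simp add: path_prob_def)
    qed
    have tm: "trans_mat G (g(Suc t := y)) (Suc t) = Hm ** Phi" for y
    proof -
      have "trans_mat G (g(Suc t := y)) t = trans_mat G g t" by (rule trans_mat_cong) auto
      then show ?thesis by (simp add: Phi_def Hm_def)
    qed
    have tr: "trace (transpose (Hm ** Phi) ** M y ** (Hm ** Phi) ** S)
        = trace ((transpose Phi ** transpose Hm) ** M y ** (Hm ** Phi ** S))" for y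
      by (simp add: matrix_transpose_mul matrix_mul_assoc)
    have trL: "trace (transpose Phi ** Lam p G M (g t) ** Phi ** S)
        = trace ((transpose Phi ** transpose Hm) ** (\<Sum>y\<in>UNIV. p (g t) y *\<^sub>R M y) ** (Hm ** Phi ** S))"
      by (simp add: Lam_def mode_expect_def matrix_mul_assoc Hm_def)
    have "(\<Sum>y\<in>UNIV. F (g(Suc t := y))) = (\<Sum>y\<in>UNIV. path_prob q p g t * (p (g t) y *
        trace ((transpose Phi ** transpose Hm) ** M y ** (Hm ** Phi ** S))))"
      by (simp add: F_def pp tm tr mult.assoc del: trans_mat.simps)
    also have "\<dots> = path_prob q p g t * trace (transpose Phi ** Lam p G M (g t) ** Phi ** S)"
      by (simp add: trL trace_lin sum_distrib_left)
    finally show "(\<Sum>y\<in>UNIV. F (g(Suc t := y))) = path_prob q p g t *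
        trace (transpose (trans_mat G g t) ** Lam p G M (g t) ** trans_mat G g t ** S)"
      by (simp add: Phi_def)
  qed
  also have "\<dots> = quad_expect q p S G (Lam p G M) t"
    by (simp add: quad_expect_def)
  finally show ?thesis .
qed

lemma quad_expect_0:
  fixes G M :: "'s::finite \<Rightarrow> real^'n^'n"
  shows "quad_expect q p S G M 0 = ip M (X0 q S)"
proof -
  have PE: "PiE {..0::nat} (\<lambda>_. UNIV::'s set) = (\<lambda>y. (\<lambda>_. undefined)(0 := y)) ` UNIV"
  proof -
    have "PiE {..0::nat} (\<lambda>_. UNIV::'s set) = (\<lambda>(y, g). g(0 := y)) ` (UNIV \<times> PiE {} (\<lambda>_. UNIV))"
    proof -
      have a0: "{..0::nat} = insert 0 {}" by auto
      show ?thesis unfolding a0 by (rule PiE_insert_eq)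
    qed
    also have "\<dots> = (\<lambda>y. (\<lambda>_. undefined)(0 := y)) ` UNIV" by auto
    finally show ?thesis .
  qed
  have inj: "inj (\<lambda>y::'s. (\<lambda>_::nat. undefined)(0 := y))"
    by (auto simp: inj_on_def fun_eq_iff)
  have "quad_expect q p S G M 0 = (\<Sum>y\<in>UNIV. q y * trace (M y ** S))"
    unfolding quad_expect_def PE by (simp add: sum.reindex[OF inj] path_prob_def)
  also have "\<dots> = ip M (X0 q S)"
    by (simp add: ip_def X0_def matrix_scalar_ac scalar_matrix_assoc[symmetric] trace_scaleR)
  finally show ?thesis .
qed

lemma quad_expect_ip:
  fixes G M :: "'s::finite \<Rightarrow> real^'n^'n"
  shows "quad_expect q p S G M t = ip ((Lam p G ^^ t) M) (X0 q S)"
proof (induction t arbitrary: M)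
  case 0 then show ?case by (simp add: quad_expect_0)
next
  case (Suc t) then show ?case by (simp add: quad_expect_Suc funpow_Suc_right del: funpow.simps)
qed

abbreviation I1 :: "'s \<Rightarrow> real^'n^'n" where "I1 \<equiv> (\<lambda>_. mat 1)"

lemma stoch_nonneg: "stochastic_matrix p \<Longrightarrow> \<forall>i j. p i j \<ge> 0"
  by (simp add: stochastic_matrix_def)
lemma stoch_sum: "stochastic_matrix p \<Longrightarrow> (\<Sum>j\<in>UNIV. p i j) = 1"
  by (simp add: stochastic_matrix_def)

lemma Lam_fun_scale: "Lam p G (\<lambda>j. c *\<^sub>R V j) = (\<lambda>i. c *\<^sub>R Lam p G V i)"
  by (rule ext) (rule Lam_scale)
lemma Lam_fun_diff: "Lam p G (\<lambda>j. V j - W j) = (\<lambda>i. Lam p G V i - Lam p G W i)"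
  by (rule ext) (rule Lam_diff)
lemma Lam_fun_add: "Lam p G (\<lambda>j. V j + W j) = (\<lambda>i. Lam p G V i + Lam p G W i)"
  by (rule ext) (rule Lam_add)

lemma Lampow_scale: "(Lam p G ^^ t) (\<lambda>j. c *\<^sub>R V j) = (\<lambda>i. c *\<^sub>R (Lam p G ^^ t) V i)"
  by (induction t) (simp_all add: Lam_fun_scale)
lemma Lampow_diff: "(Lam p G ^^ t) (\<lambda>j. V j - W j) = (\<lambda>i. (Lam p G ^^ t) V i - (Lam p G ^^ t) W i)"
  by (induction t) (simp_all add: Lam_fun_diff)
lemma Lampow_add: "(Lam p G ^^ t) (\<lambda>j. V j + W j) = (\<lambda>i. (Lam p G ^^ t) V i + (Lam p G ^^ t) W i)"
  by (induction t) (simp_all add: Lam_fun_add)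

lemma Lampow_mono:
  assumes "stochastic_matrix p" "\<And>j y. qf (V j) y \<le> qf (W j) y"
  shows "qf ((Lam p G ^^ t) V i) x \<le> qf ((Lam p G ^^ t) W i) x"
proof (induction t arbitrary: i x)
  case 0 then show ?case using assms(2) by simp
next
  case (Suc t)
  have "qf (Lam p G ((Lam p G ^^ t) V) i) x \<le> qf (Lam p G ((Lam p G ^^ t) W) i) x"
    by (rule Lam_mono[OF stoch_nonneg[OF assms(1)]]) (rule Suc.IH)
  then show ?case by simp
qed

lemma Lampow_nonneg:
  assumes "stochastic_matrix p" "\<And>j y. 0 \<le> qf (V j) y"
  shows "0 \<le> qf ((Lam p G ^^ t) V i) x"
proof (induction t arbitrary: i x)
  case 0 then show ?case using assms(2) by simp
next
  case (Suc t)
  have "0 \<le> qf (Lam p G ((Lam p G ^^ t) V) i) x"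
    by (rule Lam_nonneg[OF stoch_nonneg[OF assms(1)]]) (rule Suc.IH)
  then show ?case by simp
qed

lemma Lampow_transpose: "transpose ((Lam p G ^^ t) V i) = (Lam p G ^^ t) (\<lambda>j. transpose (V j)) i"
proof (induction t arbitrary: i)
  case 0 then show ?case by simp
next
  case (Suc t)
  have "transpose ((Lam p G ^^ Suc t) V i) = Lam p G (\<lambda>j. transpose ((Lam p G ^^ t) V j)) i"
    by (simp add: Lam_transpose)
  also have "(\<lambda>j. transpose ((Lam p G ^^ t) V j)) = (Lam p G ^^ t) (\<lambda>j. transpose (V j))"
    using Suc by (simp add: fun_eq_iff)
  finally show ?case by simp
qed

lemma sum_mv: "(\<Sum>j\<in>I. f j) *v (z::real^'n) = (\<Sum>j\<in>I. (f j :: real^'n^'m) *v z)"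
  by (induction I rule: infinite_finite_induct) (simp_all add: matrix_vector_mult_add_rdistrib)

lemma dot_Lam: "x \<bullet> (Lam p G W i *v y) = (\<Sum>j\<in>UNIV. p i j * ((G i *v x) \<bullet> (W j *v (G i *v y))))"
proof -
  have "Lam p G W i *v y = transpose (G i) *v (mode_expect p W i *v (G i *v y))"
    by (simp add: Lam_def matrix_vector_mul_assoc matrix_mul_assoc del: transpose_matrix_vector)
  then have "x \<bullet> (Lam p G W i *v y) = (G i *v x) \<bullet> (mode_expect p W i *v (G i *v y))"
    by (simp add: dot_transpose del: transpose_matrix_vector)
  also have "\<dots> = (\<Sum>j\<in>UNIV. p i j * ((G i *v x) \<bullet> (W j *v (G i *v y))))"
    by (simp add: mode_expect_def sum_mv scaleR_mv inner_sum_right)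
  finally show ?thesis .
qed

lemma norm_prod_le: "norm (x::'a::real_normed_vector) * norm y \<le> (norm x ^ 2 + norm y ^ 2) / 2"
proof -
  have "0 \<le> (norm x - norm y)^2" by simp
  then show ?thesis by (simp add: power2_eq_square algebra_simps)
qed

lemma bilin_prop:
  assumes st: "stochastic_matrix p" and c0: "0 \<le> c"
    and D: "\<And>j x y. \<bar>x \<bullet> (D j *v y)\<bar> \<le> c * norm x * norm y"
  shows "\<bar>x \<bullet> ((Lam p G ^^ t) D i *v y)\<bar> \<le> c / 2 * (qf ((Lam p G ^^ t) I1 i) x + qf ((Lam p G ^^ t) I1 i) y)"
proof (induction t arbitrary: i x y)
  case 0
  have "\<bar>x \<bullet> (D i *v y)\<bar> \<le> c * norm x * norm y" by (rule D)
  then have "\<bar>x \<bullet> (D i *v y)\<bar> \<le> c * (norm x * norm y)" by (simp add: mult.assoc)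
  also have "\<dots> \<le> c * ((norm x ^ 2 + norm y ^ 2) / 2)" by (intro mult_left_mono norm_prod_le c0)
  finally show ?case by (simp add: qf_mat1)
next
  case (Suc t)
  define W where "W = (Lam p G ^^ t) D"
  define E where "E = (Lam p G ^^ t) I1"
  have pn: "\<forall>i j. p i j \<ge> 0" using stoch_nonneg[OF st] .
  have "\<bar>x \<bullet> ((Lam p G ^^ Suc t) D i *v y)\<bar> = \<bar>\<Sum>j\<in>UNIV. p i j * ((G i *v x) \<bullet> (W j *v (G i *v y)))\<bar>"
    by (simp add: W_def dot_Lam)
  also have "\<dots> \<le> (\<Sum>j\<in>UNIV. \<bar>p i j * ((G i *v x) \<bullet> (W j *v (G i *v y)))\<bar>)" by (rule sum_abs)
  also have "\<dots> \<le> (\<Sum>j\<in>UNIV. p i j * (c / 2 * (qf (E j) (G i *v x) + qf (E j) (G i *v y))))"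
  proof (rule sum_mono)
    fix j
    have "\<bar>p i j * ((G i *v x) \<bullet> (W j *v (G i *v y)))\<bar> = p i j * \<bar>(G i *v x) \<bullet> (W j *v (G i *v y))\<bar>"
      using pn by (simp add: abs_mult)
    also have "\<dots> \<le> p i j * (c / 2 * (qf (E j) (G i *v x) + qf (E j) (G i *v y)))"
    proof (rule mult_left_mono)
      show "\<bar>(G i *v x) \<bullet> (W j *v (G i *v y))\<bar> \<le> c / 2 * (qf (E j) (G i *v x) + qf (E j) (G i *v y))"
        unfolding W_def E_def by (rule Suc.IH)
    qed (use pn in auto)
    finally show "\<bar>p i j * ((G i *v x) \<bullet> (W j *v (G i *v y)))\<bar> \<le> p i j * (c / 2 * (qf (E j) (G i *v x) + qf (E j) (G i *v y)))" .
  qed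
  also have "\<dots> = c / 2 * (qf (Lam p G E i) x + qf (Lam p G E i) y)"
    by (simp add: qf_Lam sum_distrib_left sum.distrib algebra_simps)
  also have "\<dots> = c / 2 * (qf ((Lam p G ^^ Suc t) I1 i) x + qf ((Lam p G ^^ Suc t) I1 i) y)"
    by (simp add: E_def)
  finally show ?case .
qed

lemma E_psd:
  assumes "stochastic_matrix p"
  shows "pos_semidef_mat ((Lam p G ^^ t) I1 i)"
  unfolding psd_iff
proof
  show "transpose ((Lam p G ^^ t) I1 i) = (Lam p G ^^ t) I1 i"
    by (simp add: Lampow_transpose)
  show "\<forall>x. 0 \<le> qf ((Lam p G ^^ t) I1 i) x"
    by (intro allI Lampow_nonneg[OF assms]) (simp add: qf_mat1)
qed

lemma stable_decay:
  fixes G :: "'s::finite \<Rightarrow> real^'n^'n"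
  assumes st: "stochastic_matrix p" and ms: "mean_square_stable p G"
  shows "\<exists>C \<rho>. 0 \<le> C \<and> 0 \<le> \<rho> \<and> \<rho> < 1 \<and> (\<forall>t i x. qf ((Lam p G ^^ t) (I1::'s \<Rightarrow> real^'n^'n) i) x \<le> C * \<rho>^t * norm x ^ 2)"
proof -
  define E where "E = (\<lambda>t. (Lam p G ^^ t) (I1::'s \<Rightarrow> real^'n^'n))"
  have Epsd: "pos_semidef_mat (E t i)" for t i unfolding E_def by (rule E_psd[OF st])
  have trE: "(\<lambda>t. trace (E t i)) \<longlonglongrightarrow> 0" for i
  proof -
    define q where "q = (\<lambda>j. if j = i then 1 else (0::real))"
    have pq: "prob_vector q" by (simp add: prob_vector_def q_def)
    have pI: "pos_semidef_mat (mat 1 :: real^'n^'n)" by (simp add: psd_iff qf_mat1)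
    have "(\<lambda>t. quad_expect q p (mat 1) G I1 t) \<longlonglongrightarrow> 0"
      using ms pq pI by (simp add: mean_square_stable_def)
    moreover have "quad_expect q p (mat 1) G I1 t = trace (E t i)" for t
    proof -
      have "quad_expect q p (mat 1) G I1 t = (\<Sum>j\<in>UNIV. q j * trace (E t j))"
        by (simp add: quad_expect_ip ip_def X0_def E_def matrix_scalar_ac scalar_matrix_assoc[symmetric] trace_scaleR)
      also have "\<dots> = (\<Sum>j\<in>UNIV. if j = i then trace (E t j) else 0)"
        by (rule sum.cong) (auto simp: q_def)
      also have "\<dots> = trace (E t i)" by simp
      finally show ?thesis .
    qed
    ultimately show ?thesis by simp
  qed
  have "\<forall>\<^sub>F t in sequentially. \<forall>i. trace (E t i) < 1/2"
    by (intro eventually_all_finite allI order_tendstoD(2)[OF trE]) simp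
  then obtain N where N: "\<And>i. trace (E N i) < 1/2" by (auto simp: eventually_sequentially)
  have N0: "N \<noteq> 0"
  proof
    assume "N = 0"
    then have "trace (E N i) = real CARD('n)" for i by (simp add: E_def trace_I)
    moreover have "real CARD('n) \<ge> 1" by simp
    ultimately have "trace (E N undefined) \<ge> 1" by simp
    then show False using N[of undefined] by linarith
  qed
  define C0 where "C0 = (\<Sum>r<N. \<Sum>i\<in>UNIV. trace (E r i))"
  have C0b: "trace (E r i) \<le> C0" if "r < N" for r i
  proof -
    have "trace (E r i) \<le> (\<Sum>i\<in>UNIV. trace (E r i))"
      by (rule member_le_sum) (auto intro: trace_psd_nonneg Epsd)
    also have "\<dots> \<le> C0" unfolding C0_def using that
      by (intro member_le_sum) (auto intro!: sum_nonneg trace_psd_nonneg Epsd)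
    finally show ?thesis .
  qed
  have C0nn: "0 \<le> C0" unfolding C0_def by (intro sum_nonneg trace_psd_nonneg Epsd)
  have EN: "qf (E N i) x \<le> 1/2 * norm x ^ 2" for i x
  proof -
    have "qf (E N i) x \<le> trace (E N i) * norm x ^ 2" by (rule qf_le_trace[OF Epsd])
    also have "\<dots> \<le> 1/2 * norm x ^ 2" using N[of i] by (intro mult_right_mono) auto
    finally show ?thesis .
  qed
  have blk: "qf (E (k * N + r) i) x \<le> (1/2)^k * C0 * norm x ^ 2" if "r < N" for k r i x
  proof (induction k arbitrary: i x)
    case 0
    have "qf (E r i) x \<le> trace (E r i) * norm x ^ 2" by (rule qf_le_trace[OF Epsd])
    also have "\<dots> \<le> C0 * norm x ^ 2" using C0b[OF that] by (intro mult_right_mono) auto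
    finally show ?case by simp
  next
    case (Suc k)
    define c where "c = (1/2)^k * C0"
    have "E (Suc k * N + r) = (Lam p G ^^ N) (E (k * N + r))"
      by (simp add: E_def funpow_add add.assoc)
    then have "qf (E (Suc k * N + r) i) x = qf ((Lam p G ^^ N) (E (k * N + r)) i) x" by simp
    also have "\<dots> \<le> qf ((Lam p G ^^ N) (\<lambda>j. c *\<^sub>R mat 1) i) x"
      by (rule Lampow_mono[OF st]) (use Suc in \<open>simp add: qf_scaleR qf_mat1 c_def\<close>)
    also have "\<dots> = c * qf (E N i) x" by (simp add: Lampow_scale qf_scaleR E_def)
    also have "\<dots> \<le> c * (1/2 * norm x ^ 2)"
      using EN by (intro mult_left_mono) (auto simp: c_def C0nn)
    finally show ?case by (simp add: c_def)
  qed
  define \<rho> where "\<rho> = root N (1/2)"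
  have r0: "0 \<le> \<rho>" by (simp add: \<rho>_def real_root_ge_zero)
  have rN: "\<rho> ^ N = 1/2" using N0 by (simp add: \<rho>_def real_root_pow_pos2)
  have r1: "\<rho> < 1" using N0 by (simp add: \<rho>_def real_root_lt_1_iff)
  have main: "qf (E t i) x \<le> (2 * C0) * \<rho>^t * norm x ^ 2" for t i x
  proof -
    define k where "k = t div N"
    define r where "r = t mod N"
    have t: "t = k * N + r" by (simp add: k_def r_def)
    have rN': "r < N" using N0 by (simp add: r_def)
    have "\<rho>^N \<le> \<rho>^r" using rN' r0 r1 by (intro power_decreasing) auto
    then have "1/2 \<le> \<rho>^r" using rN by simp
    have "(1/2)^k = \<rho>^(k*N)" by (simp add: power_mult rN[symmetric] mult.commute)
    have pk: "(1/2)^k \<le> 2 * \<rho>^t"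
    proof -
      have "\<rho>^t = \<rho>^(k*N) * \<rho>^r" by (simp add: t power_add)
      also have "\<dots> \<ge> (1/2)^k * (1/2)"
        using \<open>1/2 \<le> \<rho>^r\<close> \<open>(1/2)^k = \<rho>^(k*N)\<close> r0
        by (metis mult_left_mono zero_le_power)
      finally show ?thesis by simp
    qed
    have "qf (E t i) x \<le> (1/2)^k * C0 * norm x ^ 2" using blk[OF rN'] t by simp
    also have "\<dots> \<le> (2 * \<rho>^t) * C0 * norm x ^ 2"
      using pk C0nn by (intro mult_right_mono) auto
    finally show ?thesis by (simp add: mult_ac)
  qed
  show ?thesis
    by (rule exI[of _ "2 * C0"], rule exI[of _ \<rho>]) (use main r0 r1 C0nn in \<open>auto simp: E_def\<close>)
qed

lemma axis_entry: "axis a (1::real) \<bullet> ((M::real^'n^'m) *v axis b 1) = M$a$b"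
proof -
  have "axis a 1 \<bullet> (M *v axis b 1) = (M *v axis b 1) $ a" by (simp add: inner_axis')
  also have "\<dots> = M$a \<bullet> axis b 1" by (rule matrix_vector_mul_component)
  also have "\<dots> = M$a$b" by (simp add: inner_axis)
  finally show ?thesis .
qed

lemma norm_mat_le: "norm (M::real^'n^'m) \<le> (\<Sum>i\<in>UNIV. \<Sum>j\<in>UNIV. \<bar>M$i$j\<bar>)"
proof -
  have "norm M \<le> (\<Sum>i\<in>UNIV. norm (M$i))"
    unfolding norm_vec_def by (rule L2_set_le_sum) simp
  also have "\<dots> \<le> (\<Sum>i\<in>UNIV. \<Sum>j\<in>UNIV. \<bar>M$i$j\<bar>)"
    by (intro sum_mono norm_le_l1_cart)
  finally show ?thesis .
qed

lemma onorm_nn: "0 \<le> onorm ((*v) (M::real^'n^'m))"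
  by (rule onorm_pos_le[OF matrix_vector_mul_bounded_linear])

lemma decay_bilin:
  fixes G :: "'s::finite \<Rightarrow> real^'n^'n"
  assumes st: "stochastic_matrix p" and ms: "mean_square_stable p G"
  shows "\<exists>\<rho>. 0 \<le> \<rho> \<and> \<rho> < 1 \<and> (\<forall>D::'s \<Rightarrow> real^'n^'n. \<exists>K\<ge>0. \<forall>t i x y.
            \<bar>x \<bullet> ((Lam p G ^^ t) D i *v y)\<bar> \<le> K * \<rho>^t * (norm x ^ 2 + norm y ^ 2))"
proof -
  obtain C \<rho> where C: "0 \<le> C" "0 \<le> \<rho>" "\<rho> < 1"
    and E: "\<And>t i x. qf ((Lam p G ^^ t) (I1::'s \<Rightarrow> real^'n^'n) i) x \<le> C * \<rho>^t * norm x ^ 2"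
    using stable_decay[OF st ms] by blast
  have "\<exists>K\<ge>0. \<forall>t i x y. \<bar>x \<bullet> ((Lam p G ^^ t) D i *v y)\<bar> \<le> K * \<rho>^t * (norm x ^ 2 + norm y ^ 2)"
    for D :: "'s \<Rightarrow> real^'n^'n"
  proof -
    define c where "c = (\<Sum>j\<in>UNIV. onorm ((*v) (D j)))"
    have c0: "0 \<le> c" unfolding c_def by (intro sum_nonneg onorm_nn)
    have Db: "\<bar>x \<bullet> (D j *v y)\<bar> \<le> c * norm x * norm y" for j x y
    proof -
      have "\<bar>x \<bullet> (D j *v y)\<bar> \<le> onorm ((*v) (D j)) * norm x * norm y" by (rule bilin_bound)
      also have "onorm ((*v) (D j)) \<le> c" unfolding c_def
        by (rule member_le_sum) (auto intro: onorm_nn)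
      then have "onorm ((*v) (D j)) * norm x * norm y \<le> c * norm x * norm y"
        by (intro mult_right_mono) auto
      finally show ?thesis .
    qed
    have "\<bar>x \<bullet> ((Lam p G ^^ t) D i *v y)\<bar> \<le> (c * C / 2) * \<rho>^t * (norm x ^ 2 + norm y ^ 2)" for t i x y
    proof -
      have "\<bar>x \<bullet> ((Lam p G ^^ t) D i *v y)\<bar> \<le> c / 2 * (qf ((Lam p G ^^ t) I1 i) x + qf ((Lam p G ^^ t) I1 i) y)"
        by (rule bilin_prop[OF st c0 Db])
      also have "\<dots> \<le> c / 2 * (C * \<rho>^t * norm x ^ 2 + C * \<rho>^t * norm y ^ 2)"
        using c0 by (intro mult_left_mono add_mono E) auto
      finally show ?thesis by (simp add: algebra_simps)
    qed
    then show ?thesis using c0 C by (intro exI[of _ "c * C / 2"]) auto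
  qed
  then show ?thesis using C by blast
qed

lemma decay_entry:
  assumes "\<forall>t i x y. \<bar>x \<bullet> ((F t i :: real^'n^'n) *v y)\<bar> \<le> K * \<rho>^t * (norm x ^ 2 + norm y ^ 2)"
  shows "\<bar>F t i $ a $ b\<bar> \<le> 2 * K * \<rho>^t"
proof -
  have "\<bar>axis a 1 \<bullet> (F t i *v axis b 1)\<bar> \<le> K * \<rho>^t * (norm (axis a (1::real)) ^ 2 + norm (axis b (1::real)) ^ 2)"
    using assms by blast
  then show ?thesis by (simp add: axis_entry)
qed

lemma decay_summable:
  fixes F :: "nat \<Rightarrow> real^'n^'m"
  assumes F: "\<And>t a b. \<bar>F t $ a $ b\<bar> \<le> K * \<rho>^t" and r: "0 \<le> \<rho>" "\<rho> < 1"
  shows "summable F" "F \<longlonglongrightarrow> 0"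
proof -
  have "norm (F t) \<le> (real CARD('m) * real CARD('n) * K) * \<rho>^t" for t
  proof -
    have "norm (F t) \<le> (\<Sum>i\<in>UNIV. \<Sum>j\<in>UNIV. \<bar>F t$i$j\<bar>)" by (rule norm_mat_le)
    also have "\<dots> \<le> (\<Sum>i\<in>(UNIV::'m set). \<Sum>j\<in>(UNIV::'n set). K * \<rho>^t)"
      by (intro sum_mono F)
    finally show ?thesis by simp
  qed
  note nb = this
  have sg: "summable (\<lambda>t. (real CARD('m) * real CARD('n) * K) * \<rho>^t)"
    using r by (intro summable_mult summable_geometric) simp
  show "summable F"
    by (rule summable_comparison_test[of F "\<lambda>t. (real CARD('m) * real CARD('n) * K) * \<rho>^t", OF _ sg])
       (use nb in blast)
  then show "F \<longlonglongrightarrow> 0" by (rule summable_LIMSEQ_zero)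
qed

lemma Lampow_summable:
  fixes G D :: "'s::finite \<Rightarrow> real^'n^'n"
  assumes st: "stochastic_matrix p" and ms: "mean_square_stable p G"
  shows "summable (\<lambda>t. (Lam p G ^^ t) D i)" "(\<lambda>t. (Lam p G ^^ t) D i) \<longlonglongrightarrow> 0"
proof -
  obtain \<rho> where r: "0 \<le> \<rho>" "\<rho> < 1" and KK: "\<And>D::'s \<Rightarrow> real^'n^'n. \<exists>K\<ge>0. \<forall>t i x y.
            \<bar>x \<bullet> ((Lam p G ^^ t) D i *v y)\<bar> \<le> K * \<rho>^t * (norm x ^ 2 + norm y ^ 2)"
    using decay_bilin[OF st ms] by blast
  obtain K where K: "\<forall>t i x y. \<bar>x \<bullet> ((Lam p G ^^ t) D i *v y)\<bar> \<le> K * \<rho>^t * (norm x ^ 2 + norm y ^ 2)"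
    using KK[of D] by blast
  have e: "\<bar>(Lam p G ^^ t) D i $ a $ b\<bar> \<le> (2 * K) * \<rho>^t" for t a b
    using decay_entry[of "\<lambda>t i. (Lam p G ^^ t) D i", OF K] by simp
  show "summable (\<lambda>t. (Lam p G ^^ t) D i)" "(\<lambda>t. (Lam p G ^^ t) D i) \<longlonglongrightarrow> 0"
    by (rule decay_summable[OF e r])+
qed

lemma bl_congr: "bounded_linear (\<lambda>X::real^'n^'n. (L::real^'n^'m) ** X ** (Rm::real^'k^'n))"
  unfolding linear_conv_bounded_linear[symmetric]
  by (rule linearI) (simp_all add: matrix_add_ldistrib matrix_add_rdistrib matrix_scalar_ac scalar_matrix_assoc)

lemma Lam_sums:
  assumes "\<And>j. (\<lambda>t. V t j) sums W j"
  shows "(\<lambda>t. Lam p G (V t) i) sums Lam p G W i"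
proof -
  have "(\<lambda>t. mode_expect p (V t) i) sums mode_expect p W i"
    unfolding mode_expect_def
    by (intro sums_sum bounded_linear.sums[OF bounded_linear_scaleR_right] assms)
  then show ?thesis
    unfolding Lam_def by (rule bounded_linear.sums[OF bl_congr])
qed

lemma lyap_solution:
  fixes G Qk :: "'s::finite \<Rightarrow> real^'n^'n"
  assumes st: "stochastic_matrix p" and ms: "mean_square_stable p G"
  shows "\<exists>P. (\<forall>i. P i = Qk i + Lam p G P i) \<and> (\<forall>P'. (\<forall>i. P' i = Qk i + Lam p G P' i) \<longrightarrow> P' = P)
           \<and> (\<forall>i. (\<lambda>t. (Lam p G ^^ t) Qk i) sums P i)"
proof -
  define P where "P = (\<lambda>i. suminf (\<lambda>t. (Lam p G ^^ t) Qk i))"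
  have sP: "(\<lambda>t. (Lam p G ^^ t) Qk i) sums P i" for i
    unfolding P_def by (rule summable_sums[OF Lampow_summable(1)[OF st ms]])
  have eq: "P i = Qk i + Lam p G P i" for i
  proof -
    have "(\<lambda>t. Lam p G ((Lam p G ^^ t) Qk) i) sums Lam p G P i" by (rule Lam_sums[OF sP])
    then have "(\<lambda>t. (Lam p G ^^ Suc t) Qk i) sums Lam p G P i" by simp
    then have "(\<lambda>t. (Lam p G ^^ t) Qk i) sums (Lam p G P i + Qk i)"
      by (subst (asm) sums_Suc_iff) simp
    then show ?thesis using sums_unique2[OF sP] by (simp add: add.commute)
  qed
  have uniq: "P' = P" if P': "\<forall>i. P' i = Qk i + Lam p G P' i" for P'
  proof -
    define D where "D = (\<lambda>i. P' i - P i)"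
    have LD: "Lam p G D = D"
    proof
      fix i
      have "Lam p G D i = Lam p G P' i - Lam p G P i" unfolding D_def by (rule Lam_diff)
      also have "\<dots> = D i"
      proof -
        have a: "Lam p G P' i = P' i - Qk i" using P' by (metis add_diff_cancel_left')
        have b: "Lam p G P i = P i - Qk i" using eq[of i] by (metis add_diff_cancel_left')
        show ?thesis by (simp add: a b D_def)
      qed
      finally show "Lam p G D i = D i" .
    qed
    have pw: "(Lam p G ^^ t) D = D" for t by (induction t) (simp_all add: LD)
    have "D i = 0" for i
    proof -
      have "(\<lambda>t. (Lam p G ^^ t) D i) \<longlonglongrightarrow> 0" by (rule Lampow_summable(2)[OF st ms])
      then have "(\<lambda>t. D i) \<longlonglongrightarrow> 0" by (simp add: pw)
      then show ?thesis by (simp add: LIMSEQ_const_iff)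
    qed
    then show ?thesis by (auto simp: D_def fun_eq_iff)
  qed
  show ?thesis using eq uniq sP by blast
qed

lemma ip_Lampow: "ip ((Lam p G ^^ t) M) V = ip M ((T_op p G ^^ t) V)"
proof (induction t arbitrary: V)
  case 0 then show ?case by simp
next
  case (Suc t)
  have "ip ((Lam p G ^^ Suc t) M) V = ip ((Lam p G ^^ t) M) (T_op p G V)"
    by (simp add: duality)
  also have "\<dots> = ip M ((T_op p G ^^ t) (T_op p G V))" by (rule Suc)
  finally show ?case by (simp add: funpow_Suc_right del: funpow.simps)
qed

lemma trace_unit: "trace ((\<chi> k l. if k = b \<and> l = a then 1 else 0) ** (W::real^'n^'n)) = W$a$b"
proof -
  have h: "(\<Sum>k\<in>UNIV. if i = b \<and> k = a then W$a$b else 0) = (if i = b then W$a$b else (0::real))" for i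
    by (cases "i = b") simp_all
  show ?thesis
    by (simp add: trace_def matrix_matrix_mult_def if_distrib if_distribR h cong: if_cong)
qed

lemma trace_bound:
  assumes "\<And>x y. \<bar>x \<bullet> ((M::real^'n^'n) *v y)\<bar> \<le> c * (norm x ^ 2 + norm y ^ 2)"
  shows "\<bar>trace (M ** V)\<bar> \<le> c * (\<Sum>k\<in>UNIV. 1 + norm (V *v axis k 1) ^ 2)"
proof -
  have "trace (M ** V) = (\<Sum>k\<in>UNIV. axis k 1 \<bullet> (M *v (V *v axis k 1)))"
    by (simp add: trace_def axis_entry[symmetric] matrix_vector_mul_assoc)
  also have "\<bar>\<dots>\<bar> \<le> (\<Sum>k\<in>UNIV. \<bar>axis k 1 \<bullet> (M *v (V *v axis k 1))\<bar>)" by (rule sum_abs)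
  also have "\<dots> \<le> (\<Sum>k\<in>UNIV. c * (1 + norm (V *v axis k 1) ^ 2))"
    by (intro sum_mono) (use assms in \<open>metis norm_axis_1 one_power2\<close>)
  finally show ?thesis by (simp add: sum_distrib_left)
qed

lemma Tpow_summable:
  fixes G V :: "'s::finite \<Rightarrow> real^'n^'n"
  assumes st: "stochastic_matrix p" and ms: "mean_square_stable p G"
  shows "summable (\<lambda>t. (T_op p G ^^ t) V i)" "(\<lambda>t. (T_op p G ^^ t) V i) \<longlonglongrightarrow> 0"
proof -
  obtain \<rho> where r: "0 \<le> \<rho>" "\<rho> < 1" and KK: "\<And>D::'s \<Rightarrow> real^'n^'n. \<exists>K\<ge>0. \<forall>t i x y.
            \<bar>x \<bullet> ((Lam p G ^^ t) D i *v y)\<bar> \<le> K * \<rho>^t * (norm x ^ 2 + norm y ^ 2)"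
    using decay_bilin[OF st ms] by blast
  define cV where "cV = (\<Sum>j\<in>UNIV. \<Sum>k\<in>UNIV. 1 + norm (V j *v axis k 1) ^ 2)"
  define U where "U = (\<lambda>a b. \<lambda>j. if j = i then (\<chi> k l. if k = b \<and> l = a then 1 else 0) else (0::real^'n^'n))"
  define Kab where "Kab = (\<lambda>a b. SOME K. K \<ge> 0 \<and> (\<forall>t i x y.
            \<bar>x \<bullet> ((Lam p G ^^ t) (U a b) i *v y)\<bar> \<le> K * \<rho>^t * (norm x ^ 2 + norm y ^ 2)))"
  have Kab: "Kab a b \<ge> 0 \<and> (\<forall>t i x y.
            \<bar>x \<bullet> ((Lam p G ^^ t) (U a b) i *v y)\<bar> \<le> Kab a b * \<rho>^t * (norm x ^ 2 + norm y ^ 2))" for a b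
    unfolding Kab_def by (rule someI_ex) (rule KK)
  define Kt where "Kt = (\<Sum>a\<in>UNIV. \<Sum>b\<in>UNIV. Kab a b)"
  have Kab_le: "Kab a b \<le> Kt" for a b
  proof -
    have "Kab a b \<le> (\<Sum>b\<in>UNIV. Kab a b)" by (rule member_le_sum) (use Kab in auto)
    also have "\<dots> \<le> Kt" unfolding Kt_def by (rule member_le_sum) (use Kab in \<open>auto intro: sum_nonneg\<close>)
    finally show ?thesis .
  qed
  have cV0: "0 \<le> cV" unfolding cV_def by (intro sum_nonneg) auto
  have e: "\<bar>(T_op p G ^^ t) V i $ a $ b\<bar> \<le> (Kt * cV) * \<rho>^t" for t a b
  proof -
    have "(T_op p G ^^ t) V i $ a $ b = ip (U a b) ((T_op p G ^^ t) V)"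
    proof -
      have "ip (U a b) ((T_op p G ^^ t) V) = (\<Sum>j\<in>UNIV. if j = i then (T_op p G ^^ t) V i $ a $ b else 0)"
        unfolding ip_def by (rule sum.cong) (auto simp: U_def trace_unit)
      then show ?thesis by simp
    qed
    also have "\<dots> = ip ((Lam p G ^^ t) (U a b)) V" by (rule ip_Lampow[symmetric])
    also have "\<bar>\<dots>\<bar> \<le> (\<Sum>j\<in>UNIV. \<bar>trace ((Lam p G ^^ t) (U a b) j ** V j)\<bar>)"
      unfolding ip_def by (rule sum_abs)
    also have "\<dots> \<le> (\<Sum>j\<in>UNIV. (Kab a b * \<rho>^t) * (\<Sum>k\<in>UNIV. 1 + norm (V j *v axis k 1) ^ 2))"
      by (intro sum_mono trace_bound) (use Kab in simp)
    also have "\<dots> = (Kab a b * \<rho>^t) * cV" by (simp add: cV_def sum_distrib_left)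
    also have "\<dots> \<le> (Kt * \<rho>^t) * cV"
      using Kab_le r cV0 by (intro mult_right_mono) auto
    finally show ?thesis by (simp add: mult_ac)
  qed
  show "summable (\<lambda>t. (T_op p G ^^ t) V i)" "(\<lambda>t. (T_op p G ^^ t) V i) \<longlonglongrightarrow> 0"
    by (rule decay_summable[OF e r])+
qed

lemma bl_trace: "bounded_linear (\<lambda>X::real^'n^'n. trace (M ** X))"
  unfolding linear_conv_bounded_linear[symmetric]
  by (rule linearI) (simp_all add: matrix_add_ldistrib trace_add matrix_scalar_ac scalar_matrix_assoc[symmetric] trace_scaleR)

lemma bl_qf: "bounded_linear (\<lambda>M::real^'n^'n. qf M x)"
  unfolding linear_conv_bounded_linear[symmetric]
  by (rule linearI) (simp_all add: qf_add qf_scaleR)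

lemma bl_transpose: "bounded_linear (\<lambda>M::real^'n^'m. transpose M)"
  unfolding linear_conv_bounded_linear[symmetric]
  by (rule linearI) (simp_all add: transpose_add transpose_scalar)

lemma ip_sums2:
  assumes "\<And>i. (\<lambda>t. W t i) sums Z i"
  shows "(\<lambda>t. ip M (W t)) sums ip M Z"
  unfolding ip_def by (intro sums_sum bounded_linear.sums[OF bl_trace] assms)

lemma ip_tendsto2:
  assumes "\<And>i. (\<lambda>t. W t i) \<longlonglongrightarrow> Z i"
  shows "(\<lambda>t. ip M (W t)) \<longlonglongrightarrow> ip M Z"
  unfolding ip_def by (intro tendsto_sum bounded_linear.tendsto[OF bl_trace] assms)

definition Xb :: "('s::finite \<Rightarrow> 's \<Rightarrow> real) \<Rightarrow> ('s \<Rightarrow> real^'n^'n) \<Rightarrow> ('s \<Rightarrow> real^'n^'n) \<Rightarrow> 's \<Rightarrow> real^'n^'n" where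
  "Xb p G V i = suminf (\<lambda>t. (T_op p G ^^ t) V i)"

lemma X_bold_Xb: "X_bold q p S A B K = Xb p (closed_loop A B K) (X0 q S)"
  by (simp add: X_bold_def Xb_def fun_eq_iff)

lemma Xb_sums:
  assumes st: "stochastic_matrix p" and ms: "mean_square_stable p (G::'s::finite \<Rightarrow> real^'n^'n)"
  shows "(\<lambda>t. (T_op p G ^^ t) V i) sums Xb p G V i"
  unfolding Xb_def by (rule summable_sums[OF Tpow_summable(1)[OF st ms]])

lemma GL:
  fixes G D E V :: "'s::finite \<Rightarrow> real^'n^'n"
  assumes st: "stochastic_matrix p" and ms: "mean_square_stable p G"
    and DE: "\<And>i. D i = E i + Lam p G D i"
  shows "ip D V = ip E (Xb p G V)"
proof -
  define f where "f = (\<lambda>t. ip D ((T_op p G ^^ t) V))"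
  have f0: "f \<longlonglongrightarrow> 0"
  proof -
    have "f \<longlonglongrightarrow> ip D (\<lambda>i. 0)"
      unfolding f_def by (intro ip_tendsto2 Tpow_summable(2)[OF st ms])
    then show ?thesis by (simp add: ip_def)
  qed
  have step: "f t - f (Suc t) = ip E ((T_op p G ^^ t) V)" for t
  proof -
    have "f (Suc t) = ip D (T_op p G ((T_op p G ^^ t) V))" by (simp add: f_def)
    also have "\<dots> = ip (Lam p G D) ((T_op p G ^^ t) V)" by (simp add: duality)
    finally have "f t - f (Suc t) = ip (\<lambda>i. D i - Lam p G D i) ((T_op p G ^^ t) V)"
      by (simp add: f_def ip_diff1)
    also have "(\<lambda>i. D i - Lam p G D i) = E" using DE by (simp add: fun_eq_iff algebra_simps)
    finally show ?thesis .
  qed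
  have "(\<lambda>t. f t - f (Suc t)) sums (f 0 - 0)" by (rule telescope_sums'[OF f0])
  moreover have "(\<lambda>t. f t - f (Suc t)) = (\<lambda>t. ip E ((T_op p G ^^ t) V))" using step by auto
  moreover have "f 0 - 0 = ip D V" by (simp add: f_def)
  ultimately have s1: "(\<lambda>t. ip E ((T_op p G ^^ t) V)) sums ip D V" by simp
  have s2: "(\<lambda>t. ip E ((T_op p G ^^ t) V)) sums ip E (Xb p G V)"
    by (intro ip_sums2 Xb_sums[OF st ms])
  show ?thesis using sums_unique2[OF s1 s2] .
qed

lemma cost_Xb:
  fixes A :: "'s::finite \<Rightarrow> real^'n^'n" and B :: "'s \<Rightarrow> real^'m^'n"
  assumes st: "stochastic_matrix p" and Ks: "K \<in> stabilizing p A B"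
  shows "lqr_cost q p S A B Q R K = ip (\<lambda>i. Q i + transpose (K i) ** R i ** K i) (Xb p (closed_loop A B K) (X0 q S))"
proof -
  define G where "G = closed_loop A B K"
  define Qk where "Qk = (\<lambda>i. Q i + transpose (K i) ** R i ** K i)"
  have ms: "mean_square_stable p G" using Ks by (simp add: stabilizing_def G_def)
  have "(\<lambda>t. quad_expect q p S G Qk t) = (\<lambda>t. ip Qk ((T_op p G ^^ t) (X0 q S)))"
    by (simp add: quad_expect_ip ip_Lampow)
  moreover have "(\<lambda>t. ip Qk ((T_op p G ^^ t) (X0 q S))) sums ip Qk (Xb p G (X0 q S))"
    by (intro ip_sums2 Xb_sums[OF st ms])
  ultimately show ?thesis
    unfolding lqr_cost_def G_def[symmetric] Qk_def[symmetric] by (simp add: sums_iff)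
qed

lemma P_mat_char:
  fixes A :: "'s::finite \<Rightarrow> real^'n^'n" and B :: "'s \<Rightarrow> real^'m^'n"
    and Q :: "'s \<Rightarrow> real^'n^'n" and R :: "'s \<Rightarrow> real^'m^'m" and K :: "'s \<Rightarrow> real^'n^'m"
  assumes st: "stochastic_matrix p" and Ks: "K \<in> stabilizing p A B"
  defines "Qk \<equiv> (\<lambda>i. Q i + transpose (K i) ** R i ** K i)"
  shows "(\<forall>i. P_mat p A B Q R K i = Qk i + Lam p (closed_loop A B K) (P_mat p A B Q R K) i)
     \<and> (\<forall>P'. (\<forall>i. P' i = Qk i + Lam p (closed_loop A B K) P' i) \<longrightarrow> P' = P_mat p A B Q R K)
     \<and> (\<forall>i. (\<lambda>t. (Lam p (closed_loop A B K) ^^ t) Qk i) sums P_mat p A B Q R K i)"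
proof -
  define G where "G = closed_loop A B K"
  have ms: "mean_square_stable p G" using Ks by (simp add: stabilizing_def G_def)
  obtain P where P: "\<forall>i. P i = Qk i + Lam p G P i"
      and U: "\<forall>P'. (\<forall>i. P' i = Qk i + Lam p G P' i) \<longrightarrow> P' = P"
      and S: "\<forall>i. (\<lambda>t. (Lam p G ^^ t) Qk i) sums P i"
    using lyap_solution[OF st ms, of Qk] by blast
  have eqP: "P_mat p A B Q R K = P"
    unfolding P_mat_def
  proof (rule the_equality)
    show "\<forall>i. P i = Q i + transpose (K i) ** R i ** K i + transpose (closed_loop A B K i) ** mode_expect p P i ** closed_loop A B K i"
      using P by (simp add: Qk_def Lam_def G_def)
    show "P' = P" if "\<forall>i. P' i = Q i + transpose (K i) ** R i ** K i + transpose (closed_loop A B K i) ** mode_expect p P' i ** closed_loop A B K i" for P'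
      using U[rule_format, of P'] that by (simp add: Qk_def Lam_def G_def)
  qed
  show ?thesis unfolding eqP G_def[symmetric] using P U S by blast
qed

lemma sums_nonneg: "f sums s \<Longrightarrow> (\<And>n. 0 \<le> f n) \<Longrightarrow> 0 \<le> (s::real)"
  using sums_le[of "\<lambda>_. 0" f 0 s] by simp

lemma qf_T: "qf (T_op p G V j) x = (\<Sum>i\<in>UNIV. p i j * qf (V i) (transpose (G i) *v x))"
proof -
  have "qf (G i ** V i ** transpose (G i)) x = qf (V i) (transpose (G i) *v x)" for i
    using qf_congr[of "transpose (G i)" "V i" x] by simp
  then show ?thesis by (simp add: T_op_def qf_sum qf_scaleR del: transpose_matrix_vector)
qed

lemma T_transpose: "transpose (T_op p G V j) = T_op p G (\<lambda>i. transpose (V i)) j"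
  by (simp add: T_op_def transpose_sum transpose_scalar matrix_transpose_mul matrix_mul_assoc)

lemma Tpow_psd:
  assumes st: "stochastic_matrix p" and V: "\<And>i. pos_semidef_mat (V i)"
  shows "pos_semidef_mat ((T_op p G ^^ t) V i)"
proof (induction t arbitrary: i)
  case 0 then show ?case using V by simp
next
  case (Suc t)
  define W where "W = (T_op p G ^^ t) V"
  have "transpose (T_op p G W i) = T_op p G W i"
    using Suc by (simp add: T_transpose psd_iff W_def)
  moreover have "0 \<le> qf (T_op p G W i) x" for x
    unfolding qf_T using Suc stoch_nonneg[OF st]
    by (intro sum_nonneg mult_nonneg_nonneg) (auto simp: psd_iff W_def)
  ultimately show ?case by (simp add: psd_iff W_def)
qed

lemma Xb_psd:
  fixes G V :: "'s::finite \<Rightarrow> real^'n^'n"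
  assumes st: "stochastic_matrix p" and ms: "mean_square_stable p G" and V: "\<And>i. pos_semidef_mat (V i)"
  shows "pos_semidef_mat (Xb p G V i)" "qf (V i) x \<le> qf (Xb p G V i) x"
proof -
  have S: "(\<lambda>t. (T_op p G ^^ t) V i) sums Xb p G V i" by (rule Xb_sums[OF st ms])
  have "(\<lambda>t. transpose ((T_op p G ^^ t) V i)) sums transpose (Xb p G V i)"
    by (rule bounded_linear.sums[OF bl_transpose S])
  moreover have "(\<lambda>t. transpose ((T_op p G ^^ t) V i)) = (\<lambda>t. (T_op p G ^^ t) V i)"
    using Tpow_psd[OF st V] by (simp add: psd_iff)
  ultimately have "(\<lambda>t. (T_op p G ^^ t) V i) sums transpose (Xb p G V i)" by simp
  then have sym: "transpose (Xb p G V i) = Xb p G V i" by (rule HOL.sym[OF sums_unique2[OF S]])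
  have Sq: "(\<lambda>t. qf ((T_op p G ^^ t) V i) y) sums qf (Xb p G V i) y" for y
    by (rule bounded_linear.sums[OF bl_qf S])
  have nn: "0 \<le> qf ((T_op p G ^^ t) V i) y" for t y using Tpow_psd[OF st V] by (simp add: psd_iff)
  have ge: "qf (V i) y \<le> qf (Xb p G V i) y" for y
  proof -
    have "(\<lambda>t. qf ((T_op p G ^^ Suc t) V i) y) sums (qf (Xb p G V i) y - qf (V i) y)"
      using Sq[of y] by (subst sums_Suc_iff) simp
    then have "0 \<le> qf (Xb p G V i) y - qf (V i) y"
      by (rule sums_nonneg) (rule nn)
    then show ?thesis by simp
  qed
  show "qf (V i) x \<le> qf (Xb p G V i) x" by (rule ge)
  show "pos_semidef_mat (Xb p G V i)"
    unfolding psd_iff using sym ge V by (auto simp: psd_iff intro: order_trans)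
qed

lemma lyap_sol_psd:
  fixes G Qk P :: "'s::finite \<Rightarrow> real^'n^'n"
  assumes st: "stochastic_matrix p" and Qk: "\<And>i. pos_semidef_mat (Qk i)"
    and P: "\<forall>i. P i = Qk i + Lam p G P i"
    and U: "\<forall>P'. (\<forall>i. P' i = Qk i + Lam p G P' i) \<longrightarrow> P' = P"
    and S: "\<forall>i. (\<lambda>t. (Lam p G ^^ t) Qk i) sums P i"
  shows "pos_semidef_mat (P i)"
proof -
  have "(\<lambda>i. transpose (P i)) = P"
  proof (rule U[rule_format])
    fix i
    have e: "P i = Qk i + Lam p G P i" using P by blast
    have "transpose (P i) = transpose (Qk i) + transpose (Lam p G P i)"
      by (subst e) (rule transpose_add)
    then show "transpose (P i) = Qk i + Lam p G (\<lambda>i. transpose (P i)) i"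
      using Qk by (simp add: Lam_transpose psd_iff)
  qed
  then have sym: "transpose (P i) = P i" by metis
  have "0 \<le> qf (P i) x" for x
  proof -
    have "(\<lambda>t. qf ((Lam p G ^^ t) Qk i) x) sums qf (P i) x"
      by (rule bounded_linear.sums[OF bl_qf S[rule_format]])
    moreover have "0 \<le> qf ((Lam p G ^^ t) Qk i) x" for t
      by (rule Lampow_nonneg[OF st]) (use Qk in \<open>simp add: psd_iff\<close>)
    ultimately show ?thesis by (rule sums_nonneg)
  qed
  then show ?thesis using sym by (simp add: psd_iff)
qed

lemma lyap_stable:
  fixes G Pl :: "'s::finite \<Rightarrow> real^'n^'n"
  assumes st: "stochastic_matrix p" and a0: "\<alpha> > 0"
    and Pn: "\<And>i x. 0 \<le> qf (Pl i) x"
    and Ly: "\<And>i x. \<alpha> * norm x ^ 2 + qf (Lam p G Pl i) x \<le> qf (Pl i) x"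
  shows "mean_square_stable p G"
proof -
  define \<beta> where "\<beta> = (\<Sum>i\<in>UNIV. spec_norm (Pl i)) + \<alpha>"
  have sn: "0 \<le> spec_norm M" for M :: "real^'n^'n" unfolding spec_norm_def by (rule onorm_nn)
  have b_ge: "\<beta> \<ge> \<alpha>" unfolding \<beta>_def by (simp add: sum_nonneg sn)
  have b0: "\<beta> > 0" using a0 b_ge by simp
  have Pb: "qf (Pl i) x \<le> \<beta> * norm x ^ 2" for i x
  proof -
    have "qf (Pl i) x \<le> spec_norm (Pl i) * norm x ^ 2" by (rule qf_le_spec)
    also have "spec_norm (Pl i) \<le> \<beta>"
    proof -
      have "spec_norm (Pl i) \<le> (\<Sum>i\<in>UNIV. spec_norm (Pl i))" by (rule member_le_sum) (auto intro: sn)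
      then show ?thesis unfolding \<beta>_def using a0 by linarith
    qed
    then have "spec_norm (Pl i) * norm x ^ 2 \<le> \<beta> * norm x ^ 2" by (intro mult_right_mono) auto
    finally show ?thesis .
  qed
  define \<gamma> where "\<gamma> = 1 - \<alpha> / \<beta>"
  have g0: "0 \<le> \<gamma>" using b_ge b0 by (simp add: \<gamma>_def field_simps)
  have g1: "\<gamma> < 1" using a0 b0 by (simp add: \<gamma>_def)
  have LamN: "0 \<le> qf (Lam p G Pl i) x" for i x
    by (rule Lam_nonneg[OF stoch_nonneg[OF st]]) (rule Pn)
  have h1: "qf (Lam p G Pl i) x \<le> \<gamma> * qf (Pl i) x" for i x
  proof -
    have "\<alpha> / \<beta> * qf (Pl i) x \<le> \<alpha> / \<beta> * (\<beta> * norm x ^ 2)"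
      using a0 b0 Pb by (intro mult_left_mono) auto
    also have "\<dots> = \<alpha> * norm x ^ 2" using b0 by simp
    finally have "\<alpha> / \<beta> * qf (Pl i) x \<le> \<alpha> * norm x ^ 2" .
    then show ?thesis using Ly[where i=i and x=x] by (simp add: \<gamma>_def algebra_simps)
  qed
  have h2: "qf ((Lam p G ^^ t) Pl i) x \<le> \<gamma>^t * qf (Pl i) x" for t i x
  proof (induction t arbitrary: i x)
    case 0 then show ?case by simp
  next
    case (Suc t)
    have "qf ((Lam p G ^^ Suc t) Pl i) x = qf ((Lam p G ^^ t) (Lam p G Pl) i) x"
      by (simp add: funpow_Suc_right del: funpow.simps)
    also have "\<dots> \<le> qf ((Lam p G ^^ t) (\<lambda>j. \<gamma> *\<^sub>R Pl j) i) x"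
      by (rule Lampow_mono[OF st]) (simp add: qf_scaleR h1)
    also have "\<dots> = \<gamma> * qf ((Lam p G ^^ t) Pl i) x" by (simp add: Lampow_scale qf_scaleR)
    also have "\<dots> \<le> \<gamma> * (\<gamma>^t * qf (Pl i) x)" using g0 Suc by (intro mult_left_mono) auto
    finally show ?case by (simp add: mult.assoc)
  qed
  have h3: "qf ((Lam p G ^^ t) I1 i) x \<le> (\<beta> / \<alpha> * \<gamma>^t) * norm x ^ 2" for t i x
  proof -
    have "qf ((Lam p G ^^ t) I1 i) x \<le> qf ((Lam p G ^^ t) (\<lambda>j. (1/\<alpha>) *\<^sub>R Pl j) i) x"
    proof (rule Lampow_mono[OF st])
      fix j y
      have "\<alpha> * norm y ^ 2 \<le> qf (Pl j) y" using Ly[where i=j and x=y] LamN[where i=j and x=y] by linarith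
      then show "qf (mat 1) y \<le> qf ((1/\<alpha>) *\<^sub>R Pl j) y"
        using a0 by (simp add: qf_mat1 qf_scaleR field_simps)
    qed
    also have "\<dots> = (1/\<alpha>) * qf ((Lam p G ^^ t) Pl i) x" by (simp add: Lampow_scale qf_scaleR)
    also have "\<dots> \<le> (1/\<alpha>) * (\<gamma>^t * (\<beta> * norm x ^ 2))"
      using a0 h2[where t=t and i=i and x=x] Pb[where i=i and x=x] g0
      by (intro mult_left_mono order_trans[OF h2 mult_left_mono]) auto
    finally show ?thesis by (simp add: field_simps)
  qed
  show ?thesis unfolding mean_square_stable_def
  proof (intro allI impI)
    fix q :: "'s \<Rightarrow> real" and S :: "real^'n^'n"
    assume q: "prob_vector q" and S: "pos_semidef_mat S"
    have q0: "0 \<le> q i" for i using q by (simp add: prob_vector_def)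
    have eq: "quad_expect q p S G I1 t = (\<Sum>i\<in>UNIV. q i * trace ((Lam p G ^^ t) I1 i ** S))" for t
      by (simp add: quad_expect_ip ip_def X0_def matrix_scalar_ac scalar_matrix_assoc[symmetric] trace_scaleR)
    have lo: "0 \<le> quad_expect q p S G I1 t" for t
      unfolding eq
      by (intro sum_nonneg mult_nonneg_nonneg q0 trace_mult_psd_nonneg[OF S])
         (auto intro: Lampow_nonneg[OF st] simp: qf_mat1)
    have up: "quad_expect q p S G I1 t \<le> (\<Sum>i\<in>UNIV. q i * (\<beta> / \<alpha> * trace S)) * \<gamma>^t" for t
    proof -
      have "quad_expect q p S G I1 t \<le> (\<Sum>i\<in>UNIV. q i * ((\<beta> / \<alpha> * \<gamma>^t) * trace S))"
        unfolding eq
        by (intro sum_mono mult_left_mono q0 trace_mult_upper[OF S] h3)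
      moreover have "(\<Sum>i\<in>UNIV. q i * ((\<beta> / \<alpha> * \<gamma>^t) * trace S)) = (\<Sum>i\<in>UNIV. q i * (\<beta> / \<alpha> * trace S)) * \<gamma>^t"
        unfolding sum_distrib_right by (rule sum.cong) (simp_all only: mult_ac)
      ultimately show ?thesis by linarith
    qed
    define c where "c = (\<Sum>i\<in>UNIV. q i * (\<beta> / \<alpha> * trace S))"
    have "(\<lambda>t. c * \<gamma>^t) \<longlonglongrightarrow> c * 0"
      using g0 g1 by (intro tendsto_mult tendsto_const LIMSEQ_power_zero) simp
    then have h0: "(\<lambda>t. c * \<gamma>^t) \<longlonglongrightarrow> 0" by simp
    have ev1: "\<forall>\<^sub>F t in sequentially. (\<lambda>_. 0::real) t \<le> quad_expect q p S G I1 t"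
      using lo by (intro always_eventually) simp
    have ev2: "\<forall>\<^sub>F t in sequentially. quad_expect q p S G I1 t \<le> c * \<gamma>^t"
      using up by (intro always_eventually) (simp add: c_def)
    show "(\<lambda>t. quad_expect q p S G I1 t) \<longlonglongrightarrow> 0"
      by (rule tendsto_sandwich[OF ev1 ev2 tendsto_const h0])
  qed
qed

lemma gn_alg:
  fixes A :: "real^'n^'n" and B :: "real^'m^'n" and K K' :: "real^'n^'m" and R :: "real^'m^'m"
    and E Qi :: "real^'n^'n"
  assumes R: "transpose R = R" and E: "transpose E = E"
  shows "Qi + transpose K' ** R ** K' + transpose (A - B ** K') ** E ** (A - B ** K')
      - (Qi + transpose K ** R ** K + transpose (A - B ** K) ** E ** (A - B ** K))
    = transpose (K' - K) ** ((R + transpose B ** E ** B) ** K - transpose B ** E ** A)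
      + transpose ((R + transpose B ** E ** B) ** K - transpose B ** E ** A) ** (K' - K)
      + transpose (K' - K) ** (R + transpose B ** E ** B) ** (K' - K)"
  by (simp add: matrix_add_ldistrib matrix_add_rdistrib matrix_sub_ldistrib matrix_sub_rdistrib
      transpose_add transpose_diff matrix_transpose_mul matrix_mul_assoc R E algebra_simps)

lemma gn_alg2:
  fixes M W :: "real^'m^'m" and L :: "real^'n^'m"
  assumes Ws: "transpose W = W" and WM: "W ** M = mat 1"
  shows "transpose (- ((2*\<eta>) *\<^sub>R (W ** L))) ** L + transpose L ** (- ((2*\<eta>) *\<^sub>R (W ** L)))
     + transpose (- ((2*\<eta>) *\<^sub>R (W ** L))) ** M ** (- ((2*\<eta>) *\<^sub>R (W ** L)))
     = (4*\<eta>^2 - 4*\<eta>) *\<^sub>R (transpose L ** W ** L)"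
proof -
  have hWM: "X ** W ** M = X" for X :: "real^'m^'n"
    by (metis WM matrix_mul_assoc matrix_mul_rid)
  have neg: "transpose (- X) = - transpose X" for X :: "real^'n^'m"
    by (vector transpose_def)
  have negl: "(- X) ** Y = - (X ** Y)" for X :: "real^'a^'b" and Y :: "real^'c^'a"
    by (vector matrix_matrix_mult_def sum_negf)
  have negr: "X ** (- Y) = - (X ** Y)" for X :: "real^'a^'b" and Y :: "real^'c^'a"
    by (vector matrix_matrix_mult_def sum_negf)
  have t1: "transpose (W ** L) = transpose L ** W" by (simp add: matrix_transpose_mul Ws)
  define N where "N = transpose L ** W ** L"
  have T1: "transpose (- ((2*\<eta>) *\<^sub>R (W ** L))) ** L = (- (2*\<eta>)) *\<^sub>R N"
    by (simp add: N_def neg negl transpose_scalar t1 scalar_matrix_assoc[symmetric])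
  have T2: "transpose L ** (- ((2*\<eta>) *\<^sub>R (W ** L))) = (- (2*\<eta>)) *\<^sub>R N"
    by (simp add: N_def negr matrix_scalar_ac scalar_matrix_assoc[symmetric] matrix_mul_assoc)
  have T3: "transpose (- ((2*\<eta>) *\<^sub>R (W ** L))) ** M ** (- ((2*\<eta>) *\<^sub>R (W ** L))) = (4*\<eta>^2) *\<^sub>R N"
  proof -
    have "transpose (- ((2*\<eta>) *\<^sub>R (W ** L))) ** M ** (- ((2*\<eta>) *\<^sub>R (W ** L)))
        = ((2*\<eta>) * (2*\<eta>)) *\<^sub>R (transpose L ** W ** M ** W ** L)"
      by (simp add: neg negl negr transpose_scalar t1 matrix_scalar_ac scalar_matrix_assoc[symmetric] matrix_mul_assoc)
    also have "transpose L ** W ** M ** W ** L = N" by (simp add: hWM N_def)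
    finally show ?thesis by (simp add: power2_eq_square)
  qed
  have sc: "(- (2*\<eta>)) + (- (2*\<eta>)) + 4*\<eta>^2 = 4*\<eta>^2 - 4*\<eta>" by simp
  have "(- (2*\<eta>)) *\<^sub>R N + (- (2*\<eta>)) *\<^sub>R N + (4*\<eta>^2) *\<^sub>R N = ((- (2*\<eta>)) + (- (2*\<eta>)) + 4*\<eta>^2) *\<^sub>R N"
    by (simp only: scaleR_left_distrib)
  also have "\<dots> = (4*\<eta>^2 - 4*\<eta>) *\<^sub>R N" by (simp only: sc)
  finally have "(- (2*\<eta>)) *\<^sub>R N + (- (2*\<eta>)) *\<^sub>R N + (4*\<eta>^2) *\<^sub>R N = (4*\<eta>^2 - 4*\<eta>) *\<^sub>R N" .
  then show ?thesis by (simp only: T1 T2 T3 N_def)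
qed

lemma dot_tXY: "x \<bullet> ((transpose (X::real^'a^'b) ** (Y::real^'c^'b)) *v z) = (X *v x) \<bullet> (Y *v z)"
proof -
  have "(transpose X ** Y) *v z = transpose X *v (Y *v z)" by (rule matrix_vector_mul_assoc[symmetric])
  then show ?thesis by (simp only: dot_transpose)
qed

lemma qf_kopt:
  fixes M W :: "real^'m^'m" and L D :: "real^'n^'m"
  assumes Ms: "transpose M = M" and Mp: "\<And>y. 0 \<le> qf M y" and MW: "M ** W = mat 1"
  shows "0 \<le> qf (transpose D ** L + transpose L ** D + transpose D ** M ** D + transpose L ** W ** L) x"
proof -
  have a: "qf (transpose D ** L) x = (D *v x) \<bullet> (L *v x)" by (simp add: qf_def dot_tXY)
  have b: "qf (transpose L ** D) x = (D *v x) \<bullet> (L *v x)" by (simp add: qf_def dot_tXY inner_commute)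
  have c: "qf (transpose D ** M ** D) x = (D *v x) \<bullet> (M *v (D *v x))"
    unfolding qf_def matrix_mul_assoc[symmetric] dot_tXY by (simp only: matrix_vector_mul_assoc)
  have d: "qf (transpose L ** W ** L) x = (L *v x) \<bullet> (W *v (L *v x))"
    unfolding qf_def matrix_mul_assoc[symmetric] dot_tXY by (simp only: matrix_vector_mul_assoc)
  define u where "u = D *v x"
  define v where "v = W *v (L *v x)"
  have Mv: "M *v v = L *v x" by (simp add: v_def matrix_vector_mul_assoc matrix_mul_assoc MW)
  have e0: "qf M (u + v) = u \<bullet> (M *v u) + u \<bullet> (M *v v) + v \<bullet> (M *v u) + v \<bullet> (M *v v)"
    unfolding qf_add_vec by (simp add: qf_def)
  have e1: "v \<bullet> (M *v u) = u \<bullet> (M *v v)" using sym_dot[OF Ms] by simp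
  have e2: "u \<bullet> (M *v v) = (D *v x) \<bullet> (L *v x)" by (simp add: Mv u_def)
  have e3: "v \<bullet> (M *v v) = (L *v x) \<bullet> (W *v (L *v x))"
    unfolding Mv by (simp add: v_def inner_commute)
  have e4: "u \<bullet> (M *v u) = (D *v x) \<bullet> (M *v (D *v x))" by (simp add: u_def)
  have "qf M (u + v) = (D *v x) \<bullet> (M *v (D *v x)) + (D *v x) \<bullet> (L *v x) + (D *v x) \<bullet> (L *v x) + (L *v x) \<bullet> (W *v (L *v x))"
    using e0 e1 e2 e3 e4 by linarith
  moreover have "0 \<le> qf M (u + v)" by (rule Mp)
  ultimately show ?thesis unfolding qf_add a b c d by linarith
qed

lemma Qf_psd:
  fixes Qi :: "real^'n^'n" and Ri :: "real^'m^'m" and Ki :: "real^'n^'m"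
  assumes "pos_def_mat Qi" "pos_def_mat Ri"
  shows "pos_semidef_mat (Qi + transpose Ki ** Ri ** Ki)"
proof -
  have Rs: "transpose Ri = Ri" using assms(2) by (simp add: pd_iff)
  have Qp: "pos_semidef_mat Qi" using assms(1) by (rule pd_psd)
  have Rp: "pos_semidef_mat Ri" using assms(2) by (rule pd_psd)
  have "transpose (Qi + transpose Ki ** Ri ** Ki) = Qi + transpose Ki ** Ri ** Ki"
    using Qp by (simp add: transpose_add matrix_transpose_mul matrix_mul_assoc Rs psd_iff)
  moreover have "0 \<le> qf (Qi + transpose Ki ** Ri ** Ki) x" for x
    using Qp Rp by (simp add: qf_add qf_congr psd_iff)
  ultimately show ?thesis by (simp add: psd_iff)
qed

lemma mode_expect_psd:
  assumes st: "stochastic_matrix p" and P: "\<And>j. pos_semidef_mat (P j)"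
  shows "pos_semidef_mat (mode_expect p P i)"
proof -
  have "transpose (mode_expect p P i) = mode_expect p P i"
    using P by (simp add: mode_expect_def transpose_sum transpose_scalar psd_iff)
  moreover have "0 \<le> qf (mode_expect p P i) y" for y
    unfolding mode_expect_def qf_sum qf_scaleR using P stoch_nonneg[OF st]
    by (intro sum_nonneg mult_nonneg_nonneg) (auto simp: psd_iff)
  ultimately show ?thesis by (simp add: psd_iff)
qed

lemma M_pd:
  fixes Ri :: "real^'m^'m" and Bi :: "real^'m^'n" and E :: "real^'n^'n"
  assumes "pos_def_mat Ri" "pos_semidef_mat E"
  shows "pos_def_mat (Ri + transpose Bi ** E ** Bi)"
proof -
  have "transpose (Ri + transpose Bi ** E ** Bi) = Ri + transpose Bi ** E ** Bi"
    using assms by (simp add: transpose_add matrix_transpose_mul matrix_mul_assoc pd_iff psd_iff)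
  moreover have "x \<noteq> 0 \<Longrightarrow> 0 < qf (Ri + transpose Bi ** E ** Bi) x" for x
  proof -
    assume "x \<noteq> 0"
    then have "0 < qf Ri x" using assms(1) by (simp add: pd_iff)
    moreover have "0 \<le> qf E (Bi *v x)" using assms(2) by (simp add: psd_iff)
    ultimately show ?thesis by (simp add: qf_add qf_congr)
  qed
  ultimately show ?thesis by (simp add: pd_iff)
qed

lemma pd_inv:
  fixes M :: "real^'m^'m"
  assumes "pos_def_mat M"
  shows "M ** matrix_inv M = mat 1" "matrix_inv M ** M = mat 1" "transpose (matrix_inv M) = matrix_inv M"
proof -
  have Ms: "transpose M = M" using assms by (simp add: pd_iff)
  have "\<forall>x. M *v x = 0 \<longrightarrow> x = 0"
  proof (intro allI impI)
    fix x assume "M *v x = 0"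
    then have "qf M x = 0" by (simp add: qf_def)
    then show "x = 0" using assms by (auto simp: pd_iff)
  qed
  then have "\<exists>B. B ** M = mat 1" using matrix_left_invertible_ker by blast
  then have "invertible M" using invertible_left_inverse by blast
  then have "\<exists>A'. M ** A' = mat 1 \<and> A' ** M = mat 1" by (simp add: invertible_def)
  then have W: "M ** matrix_inv M = mat 1 \<and> matrix_inv M ** M = mat 1"
    unfolding matrix_inv_def by (rule someI_ex)
  then show "M ** matrix_inv M = mat 1" "matrix_inv M ** M = mat 1" by auto
  define W where "W = matrix_inv M"
  have "transpose W = transpose W ** (M ** W)" using W by (simp add: W_def)
  also have "\<dots> = (transpose W ** transpose M) ** W" by (simp add: matrix_mul_assoc Ms)
  also have "transpose W ** transpose M = transpose (M ** W)" by (simp add: matrix_transpose_mul)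
  also have "\<dots> = mat 1" using W by (simp add: W_def)
  finally show "transpose (matrix_inv M) = matrix_inv M" by (simp add: W_def)
qed

lemma W_nonneg:
  fixes M W :: "real^'m^'m"
  assumes MW: "M ** W = mat 1" and Ms: "transpose M = M" and Mp: "\<And>y. 0 \<le> qf M y"
  shows "0 \<le> qf W y"
proof -
  have "y = M *v (W *v y)" by (simp add: matrix_vector_mul_assoc MW)
  then have "qf W y = (M *v (W *v y)) \<bullet> (W *v y)" unfolding qf_def by (metis inner_commute)
  also have "\<dots> = qf M (W *v y)" by (simp add: qf_def inner_commute)
  finally show ?thesis using Mp by simp
qed

lemma N_psd:
  fixes W :: "real^'m^'m" and L :: "real^'n^'m"
  assumes Ws: "transpose W = W" and Wp: "\<And>y. 0 \<le> qf W y"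
  shows "pos_semidef_mat (transpose L ** W ** L)"
  unfolding psd_iff
  by (simp add: matrix_transpose_mul matrix_mul_assoc Ws qf_congr Wp)

lemma gn_main:
  fixes A :: "'s::finite \<Rightarrow> real^'n::finite^'n"
    and B :: "'s \<Rightarrow> real^'m::finite^'n"
    and Q :: "'s \<Rightarrow> real^'n^'n"
    and R :: "'s \<Rightarrow> real^'m^'m"
    and p :: "'s \<Rightarrow> 's \<Rightarrow> real"
    and \<pi> :: "'s \<Rightarrow> real"
    and S0 :: "real^'n^'n"
    and Kopt K :: "'s \<Rightarrow> real^'n^'m"
    and \<eta> :: real
  assumes st: "stochastic_matrix p"
    and pi_pos: "\<forall>i. \<pi> i > 0"
    and S0_pd: "pos_def_mat S0"
    and Q_pd: "\<forall>i. pos_def_mat (Q i)" and R_pd: "\<forall>i. pos_def_mat (R i)"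
    and Kopt_in: "Kopt \<in> stabilizing p A B"
    and K_in: "K \<in> stabilizing p A B"
    and eta_pos: "0 < \<eta>" and eta_le: "\<eta> \<le> 1/2"
  shows "gn_step p A B Q R \<eta> K \<in> stabilizing p A B \<and>
     lqr_cost \<pi> p S0 A B Q R (gn_step p A B Q R \<eta> K) - lqr_cost \<pi> p S0 A B Q R Kopt
     \<le> (1 - 2 * mu_const \<pi> S0 / max_norm (X_bold \<pi> p S0 A B Kopt) * \<eta>) * (lqr_cost \<pi> p S0 A B Q R K - lqr_cost \<pi> p S0 A B Q R Kopt)
     \<and> 0 \<le> 1 - 2 * mu_const \<pi> S0 / max_norm (X_bold \<pi> p S0 A B Kopt) * \<eta>"
proof -
  define K' where "K' = gn_step p A B Q R \<eta> K"
  define Qf where "Qf = (\<lambda>(K2::'s \<Rightarrow> real^'n^'m) i. Q i + transpose (K2 i) ** R i ** K2 i)"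
  define G where "G = closed_loop A B K"
  define P where "P = P_mat p A B Q R K"
  define M where "M = (\<lambda>i. R i + transpose (B i) ** mode_expect p P i ** B i)"
  define L where "L = L_mat p A B Q R K"
  define W where "W = (\<lambda>i. matrix_inv (M i))"
  define N where "N = (\<lambda>i. transpose (L i) ** W i ** L i)"
  define X0' where "X0' = X0 \<pi> S0"
  define C where "C = (\<lambda>K2. lqr_cost \<pi> p S0 A B Q R K2)"
  define \<mu> where "\<mu> = mu_const \<pi> S0"
  define m where "m = max_norm (X_bold \<pi> p S0 A B Kopt)"
  define c where "c = 4*\<eta>^2 - 4*\<eta>"
  have Qfpsd: "pos_semidef_mat (Qf K2 i)" for K2 i
    unfolding Qf_def using Q_pd R_pd by (intro Qf_psd) auto
  have Rs: "transpose (R i) = R i" for i using R_pd by (simp add: pd_iff)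
  have ms: "mean_square_stable p G" using K_in by (simp add: stabilizing_def G_def)
  have PC: "(\<forall>i. P i = Qf K i + Lam p G P i) \<and> (\<forall>P'. (\<forall>i. P' i = Qf K i + Lam p G P' i) \<longrightarrow> P' = P)
      \<and> (\<forall>i. (\<lambda>t. (Lam p G ^^ t) (Qf K) i) sums P i)"
    unfolding P_def Qf_def G_def by (rule P_mat_char[OF st K_in])
  have Peq: "\<forall>i. P i = Qf K i + Lam p G P i" using PC by blast
  have Ppsd: "pos_semidef_mat (P i)" for i
    by (rule lyap_sol_psd[where Qk="Qf K" and G=G, OF st Qfpsd]) (use PC in blast)+
  have Eepsd: "pos_semidef_mat (mode_expect p P i)" for i by (rule mode_expect_psd[OF st Ppsd])
  have Mpd: "pos_def_mat (M i)" for i unfolding M_def using R_pd Eepsd by (intro M_pd) auto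
  have MW1: "M i ** W i = mat 1" and MW2: "W i ** M i = mat 1" and Ws: "transpose (W i) = W i" for i
    unfolding W_def using pd_inv[OF Mpd] by auto
  have Ms: "transpose (M i) = M i" for i using Mpd by (simp add: pd_iff)
  have Mp: "0 \<le> qf (M i) y" for i y
    using Mpd[of i] by (cases "y = 0") (auto simp: pd_iff qf_def)
  have Wp: "0 \<le> qf (W i) y" for i y by (rule W_nonneg[OF MW1 Ms Mp])
  have Npsd: "pos_semidef_mat (N i)" for i unfolding N_def by (rule N_psd[OF Ws Wp])
  have Leq: "L i = M i ** K i - transpose (B i) ** mode_expect p P i ** A i" for i
    by (simp add: L_def L_mat_def M_def P_def)
  have K'eq: "K' i = K i - (2*\<eta>) *\<^sub>R (W i ** L i)" for i
    by (simp add: K'_def gn_step_def W_def M_def P_def L_def)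
  have Eb: "Qf K2 i + Lam p (closed_loop A B K2) P i - P i
      = transpose (K2 i - K i) ** L i + transpose (L i) ** (K2 i - K i) + transpose (K2 i - K i) ** M i ** (K2 i - K i)" for K2 i
  proof -
    have Pi: "P i = Q i + transpose (K i) ** R i ** K i + transpose (A i - B i ** K i) ** mode_expect p P i ** (A i - B i ** K i)"
      using Peq unfolding Qf_def Lam_def G_def closed_loop_def by blast
    have Es: "transpose (mode_expect p P i) = mode_expect p P i" using Eepsd by (simp add: psd_iff)
    have inst: "Q i + transpose (K2 i) ** R i ** K2 i + transpose (A i - B i ** K2 i) ** mode_expect p P i ** (A i - B i ** K2 i)
      - (Q i + transpose (K i) ** R i ** K i + transpose (A i - B i ** K i) ** mode_expect p P i ** (A i - B i ** K i))
    = transpose (K2 i - K i) ** ((R i + transpose (B i) ** mode_expect p P i ** B i) ** K i - transpose (B i) ** mode_expect p P i ** A i)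
      + transpose ((R i + transpose (B i) ** mode_expect p P i ** B i) ** K i - transpose (B i) ** mode_expect p P i ** A i) ** (K2 i - K i)
      + transpose (K2 i - K i) ** (R i + transpose (B i) ** mode_expect p P i ** B i) ** (K2 i - K i)"
      by (rule gn_alg[OF Rs Es])
    show ?thesis
      using inst unfolding Pi[symmetric] Leq M_def Qf_def Lam_def closed_loop_def .
  qed
  have Eb': "Qf K' i + Lam p (closed_loop A B K') P i - P i = c *\<^sub>R N i" for i
  proof -
    have D: "K' i - K i = - ((2*\<eta>) *\<^sub>R (W i ** L i))" by (simp add: K'eq)
    show ?thesis unfolding Eb D N_def c_def by (rule gn_alg2[OF Ws MW2])
  qed
  obtain \<alpha> where a0: "\<alpha> > 0" and aQ: "\<And>i x. \<alpha> * norm x ^ 2 \<le> qf (Q i) x"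
  proof -
    have "\<forall>i. \<exists>l>0. \<forall>x. l * norm x ^ 2 \<le> qf (Q i) x" using Q_pd pd_lower by blast
    then obtain l where l: "\<And>i. l i > 0" "\<And>i x. l i * norm x ^ 2 \<le> qf (Q i) x" by metis
    define \<alpha> where "\<alpha> = Min (range l)"
    have "\<alpha> > 0" using l(1) by (simp add: \<alpha>_def)
    moreover have "\<alpha> * norm x ^ 2 \<le> qf (Q i) x" for i x
    proof -
      have "\<alpha> \<le> l i" by (simp add: \<alpha>_def)
      then have "\<alpha> * norm x ^ 2 \<le> l i * norm x ^ 2" by (intro mult_right_mono) auto
      then show ?thesis using l(2)[where i=i and x=x] by linarith
    qed
    ultimately show ?thesis using that by blast
  qed
  have hh: "\<eta> * \<eta> \<le> \<eta> * (1/2)" using eta_pos eta_le by (intro mult_left_mono) auto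
  have c_le: "c \<le> - 2 * \<eta>" using hh by (simp add: c_def power2_eq_square)
  have c0: "c \<le> 0" using c_le eta_pos by simp
  have Ly: "\<alpha> * norm x ^ 2 + qf (Lam p (closed_loop A B K') P i) x \<le> qf (P i) x" for i x
  proof -
    have "P i = Qf K' i + Lam p (closed_loop A B K') P i - c *\<^sub>R N i"
      using Eb'[of i] by (simp add: algebra_simps)
    then have "qf (P i) x = qf (Q i) x + qf (transpose (K' i) ** R i ** K' i) x + qf (Lam p (closed_loop A B K') P i) x - c * qf (N i) x"
      by (simp add: Qf_def qf_add qf_diff qf_scaleR)
    moreover have "0 \<le> qf (transpose (K' i) ** R i ** K' i) x"
      using pd_psd[of "R i"] R_pd by (simp add: qf_congr psd_iff)
    moreover have "0 \<le> qf (N i) x" using Npsd by (simp add: psd_iff)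
    then have "c * qf (N i) x \<le> 0" using c0 by (simp add: mult_nonpos_nonneg)
    moreover have "\<alpha> * norm x ^ 2 \<le> qf (Q i) x" by (rule aQ)
    ultimately show ?thesis by linarith
  qed
  have K'_in: "K' \<in> stabilizing p A B"
    unfolding stabilizing_def mem_Collect_eq
    by (rule lyap_stable[OF st a0 _ Ly]) (use Ppsd in \<open>simp add: psd_iff\<close>)
  have cost_P: "C K2 = ip (P_mat p A B Q R K2) X0'" if K2s: "K2 \<in> stabilizing p A B" for K2
  proof -
    have ms2: "mean_square_stable p (closed_loop A B K2)" using K2s by (simp add: stabilizing_def)
    have eq: "\<forall>i. P_mat p A B Q R K2 i = Qf K2 i + Lam p (closed_loop A B K2) (P_mat p A B Q R K2) i"
      using P_mat_char[OF st K2s, of Q R] by (simp add: Qf_def)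
    have "ip (P_mat p A B Q R K2) X0' = ip (Qf K2) (Xb p (closed_loop A B K2) X0')"
      by (rule GL[OF st ms2]) (use eq in blast)
    also have "\<dots> = C K2" using cost_Xb[OF st K2s, where q=\<pi> and S=S0 and Q=Q and R=R] by (simp add: C_def Qf_def X0'_def)
    finally show ?thesis by simp
  qed
  have cdiff: "C K2 - C K = ip (\<lambda>i. Qf K2 i + Lam p (closed_loop A B K2) P i - P i) (Xb p (closed_loop A B K2) X0')"
    if K2s: "K2 \<in> stabilizing p A B" for K2
  proof -
    define G2 where "G2 = closed_loop A B K2"
    define P2 where "P2 = P_mat p A B Q R K2"
    have ms2: "mean_square_stable p G2" using K2s by (simp add: stabilizing_def G2_def)
    have eq2: "\<forall>i. P2 i = Qf K2 i + Lam p G2 P2 i"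
      using P_mat_char[OF st K2s, of Q R] by (simp add: Qf_def P2_def G2_def)
    have "ip (\<lambda>i. P2 i - P i) X0' = ip (\<lambda>i. Qf K2 i + Lam p G2 P i - P i) (Xb p G2 X0')"
    proof (rule GL[OF st ms2])
      fix i
      have e: "P2 i = Qf K2 i + Lam p G2 P2 i" using eq2 by blast
      have l: "Lam p G2 (\<lambda>i. P2 i - P i) i = Lam p G2 P2 i - Lam p G2 P i" by (rule Lam_diff)
      show "P2 i - P i = (Qf K2 i + Lam p G2 P i - P i) + Lam p G2 (\<lambda>i. P2 i - P i) i"
        unfolding l by (subst e) (simp add: algebra_simps)
    qed
    moreover have "ip (\<lambda>i. P2 i - P i) X0' = C K2 - C K"
      using cost_P[OF K2s] cost_P[OF K_in] by (simp add: ip_diff1 P2_def P_def)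
    ultimately show ?thesis by (simp add: G2_def)
  qed
  define Xp where "Xp = Xb p (closed_loop A B K') X0'"
  define Xs where "Xs = Xb p (closed_loop A B Kopt) X0'"
  have ms': "mean_square_stable p (closed_loop A B K')" using K'_in by (simp add: stabilizing_def)
  have mss: "mean_square_stable p (closed_loop A B Kopt)" using Kopt_in by (simp add: stabilizing_def)
  have S0psd: "pos_semidef_mat S0" using S0_pd by (rule pd_psd)
  have X0psd: "pos_semidef_mat (X0' i)" for i
    using S0psd pi_pos by (auto simp: X0'_def X0_def psd_iff transpose_scalar qf_scaleR less_imp_le intro!: mult_nonneg_nonneg)
  have mu0: "0 \<le> \<mu>"
  proof -
    have h: "0 < Min (range \<pi>)" using pi_pos by simp
    show ?thesis unfolding \<mu>_def mu_const_def
      using h sigma_min_nonneg[of S0] pi_pos by (intro mult_nonneg_nonneg) (auto simp: less_imp_le)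
  qed
  have X0mu: "\<mu> * norm x ^ 2 \<le> qf (X0' i) x" for i x
  proof -
    have "Min (range \<pi>) \<le> \<pi> i" by simp
    moreover have "0 \<le> sigma_min S0 * norm x ^ 2" using sigma_min_nonneg[of S0] by simp
    ultimately have "Min (range \<pi>) * (sigma_min S0 * norm x ^ 2) \<le> \<pi> i * (sigma_min S0 * norm x ^ 2)"
      by (rule mult_right_mono)
    also have "\<dots> \<le> \<pi> i * qf S0 x"
      using pi_pos sigma_min_bound[OF S0psd, where x=x] by (intro mult_left_mono) (auto simp: less_imp_le)
    finally show ?thesis by (simp add: \<mu>_def mu_const_def X0'_def X0_def qf_scaleR mult.assoc)
  qed
  have Xpmu: "\<mu> * norm x ^ 2 \<le> qf (Xp i) x" for i x
    using X0mu[where i=i and x=x] Xb_psd(2)[where V=X0', OF st ms' X0psd, where i=i and x=x] unfolding Xp_def by linarith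
  have Xsmu: "\<mu> * norm x ^ 2 \<le> qf (Xs i) x" for i x
    using X0mu[where i=i and x=x] Xb_psd(2)[where V=X0', OF st mss X0psd, where i=i and x=x] unfolding Xs_def by linarith
  have Xspsd: "pos_semidef_mat (Xs i)" for i unfolding Xs_def by (rule Xb_psd(1)[where V=X0', OF st mss X0psd])
  have m_eq: "m = max_norm Xs" by (simp add: m_def Xs_def X_bold_Xb X0'_def)
  have sn_m: "spec_norm (Xs i) \<le> m" for i unfolding m_eq max_norm_def by simp
  have mu_m: "\<mu> \<le> m"
  proof -
    define x :: "real^'n" where "x = axis undefined 1"
    have nx: "norm x = 1" by (simp add: x_def)
    have "\<mu> \<le> qf (Xs undefined) x" using Xsmu[where i=undefined and x=x] nx by simp
    also have "\<dots> \<le> spec_norm (Xs undefined) * norm x ^ 2" by (rule qf_le_spec)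
    also have "\<dots> \<le> m" using sn_m nx by simp
    finally show ?thesis .
  qed
  define Str where "Str = (\<Sum>i\<in>UNIV. trace (N i))"
  have Str0: "0 \<le> Str" unfolding Str_def by (intro sum_nonneg trace_psd_nonneg Npsd)
  have d1: "C K' - C K \<le> - 2 * \<eta> * \<mu> * Str"
  proof -
    have "C K' - C K = ip (\<lambda>i. c *\<^sub>R N i) Xp"
      using cdiff[OF K'_in] Eb' by (simp add: Xp_def)
    also have "\<dots> = c * (\<Sum>i\<in>UNIV. trace (N i ** Xp i))"
      by (simp add: ip_def scalar_matrix_assoc[symmetric] trace_scaleR sum_distrib_left)
    finally have e: "C K' - C K = c * (\<Sum>i\<in>UNIV. trace (N i ** Xp i))" .
    have "\<mu> * trace (N i) \<le> trace (N i ** Xp i)" for i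
    proof -
      have "\<mu> * trace (N i) \<le> trace (Xp i ** N i)" by (rule trace_mult_lower[OF Npsd[of i] Xpmu[where i=i]])
      then show ?thesis using trace_mul_sym[of "N i" "Xp i"] by simp
    qed
    then have "\<mu> * Str \<le> (\<Sum>i\<in>UNIV. trace (N i ** Xp i))"
      unfolding Str_def sum_distrib_left by (intro sum_mono)
    then have "c * (\<Sum>i\<in>UNIV. trace (N i ** Xp i)) \<le> c * (\<mu> * Str)"
      using c0 by (rule mult_left_mono_neg)
    also have "\<dots> \<le> (- 2 * \<eta>) * (\<mu> * Str)"
      using c_le mu0 Str0 by (intro mult_right_mono) auto
    finally show ?thesis using e by (simp add: mult.assoc)
  qed
  have d2: "C K - C Kopt \<le> m * Str"
  proof -
    have e: "C Kopt - C K = (\<Sum>i\<in>UNIV. trace ((Qf Kopt i + Lam p (closed_loop A B Kopt) P i - P i) ** Xs i))"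
      using cdiff[OF Kopt_in] by (simp add: ip_def Xs_def)
    have t: "- (m * trace (N i)) \<le> trace ((Qf Kopt i + Lam p (closed_loop A B Kopt) P i - P i) ** Xs i)" for i
    proof -
      define Ebs where "Ebs = Qf Kopt i + Lam p (closed_loop A B Kopt) P i - P i"
      have "0 \<le> qf (Ebs + N i) x" for x
        unfolding Ebs_def Eb N_def by (rule qf_kopt[OF Ms Mp MW1])
      then have "0 \<le> trace ((Ebs + N i) ** Xs i)" by (intro trace_mult_psd_nonneg[OF Xspsd[of i]])
      then have h1: "0 \<le> trace (Ebs ** Xs i) + trace (N i ** Xs i)" by (simp add: matrix_add_rdistrib trace_add)
      have "trace (N i ** Xs i) = trace (Xs i ** N i)" by (rule trace_mul_sym)
      also have "\<dots> \<le> spec_norm (Xs i) * trace (N i)" by (rule trace_mult_upper[OF Npsd[of i] qf_le_spec])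
      also have "\<dots> \<le> m * trace (N i)" using sn_m[of i] trace_psd_nonneg[OF Npsd[of i]] by (intro mult_right_mono) auto
      finally show ?thesis using h1 by (simp add: Ebs_def)
    qed
    have "- (m * Str) \<le> C Kopt - C K"
      unfolding e Str_def sum_distrib_left sum_negf[symmetric] by (intro sum_mono t)
    then show ?thesis by linarith
  qed
  define f where "f = 1 - 2 * \<mu> / m * \<eta>"
  have main: "C K' - C Kopt \<le> f * (C K - C Kopt)"
  proof (cases "m = 0")
    case True
    then have "f = 1" by (simp add: f_def)
    have h: "0 \<le> \<eta> * \<mu> * Str" using eta_pos mu0 Str0 by (simp add: mult_nonneg_nonneg)
    have "- 2 * \<eta> * \<mu> * Str = - 2 * (\<eta> * \<mu> * Str)" by simp
    then have "C K' - C Kopt \<le> C K - C Kopt" using d1 h by linarith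
    with \<open>f = 1\<close> show ?thesis by simp
  next
    case False
    then have mpos: "m > 0" using mu0 mu_m by simp
    have "(C K - C Kopt) / m \<le> Str" using d2 mpos by (simp add: pos_divide_le_eq mult.commute)
    then have "2 * \<eta> * \<mu> * ((C K - C Kopt) / m) \<le> 2 * \<eta> * \<mu> * Str"
      using eta_pos mu0 by (intro mult_left_mono) auto
    moreover have "f * (C K - C Kopt) = (C K - C Kopt) - 2 * \<eta> * \<mu> * ((C K - C Kopt) / m)"
      unfolding f_def using mpos by (simp add: field_simps)
    ultimately show ?thesis using d1 by linarith
  qed
  have f0: "0 \<le> f"
  proof (cases "m = 0")
    case True then show ?thesis by (simp add: f_def)
  next
    case False
    then have mpos: "m > 0" using mu0 mu_m by simp
    have "\<mu> * \<eta> \<le> \<mu> * (1/2)" using eta_le mu0 by (rule mult_left_mono)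
    then have "2 * \<mu> * \<eta> \<le> \<mu>" by linarith
    then have "2 * \<mu> * \<eta> \<le> m" using mu_m by linarith
    then have "2 * \<mu> * \<eta> / m \<le> 1" using mpos by simp
    then show ?thesis unfolding f_def by simp
  qed
  show ?thesis using K'_in main f0
    unfolding K'_def C_def f_def \<mu>_def m_def by simp
qed

theorem theorem2:
  fixes A :: "'s::finite \<Rightarrow> real^'n::finite^'n"
    and B :: "'s \<Rightarrow> real^'m::finite^'n"
    and Q :: "'s \<Rightarrow> real^'n^'n"
    and R :: "'s \<Rightarrow> real^'m^'m"
    and p :: "'s \<Rightarrow> 's \<Rightarrow> real"
    and \<pi> :: "'s \<Rightarrow> real"
    and S0 :: "real^'n^'n"
    and Kopt K0 :: "'s \<Rightarrow> real^'n^'m"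
    and \<eta> :: real
  assumes p_stoch: "stochastic_matrix p"
    and pi_dist: "prob_vector \<pi>" and pi_pos: "\<forall>i. \<pi> i > 0"
    and S0_pd: "pos_def_mat S0"
    and Q_pd: "\<forall>i. pos_def_mat (Q i)" and R_pd: "\<forall>i. pos_def_mat (R i)"
    and stabilizable: "stabilizing p A B \<noteq> {}"
    and Kopt_in: "Kopt \<in> stabilizing p A B"
    and Kopt_opt: "\<forall>K \<in> stabilizing p A B. lqr_cost \<pi> p S0 A B Q R Kopt \<le> lqr_cost \<pi> p S0 A B Q R K"
    and K0_in: "K0 \<in> stabilizing p A B"
    and eta_pos: "0 < \<eta>" and eta_le: "\<eta> \<le> 1/2"
  shows "\<forall>n. (gn_step p A B Q R \<eta> ^^ n) K0 \<in> stabilizing p A B \<and>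
           lqr_cost \<pi> p S0 A B Q R ((gn_step p A B Q R \<eta> ^^ n) K0) - lqr_cost \<pi> p S0 A B Q R Kopt
           \<le> (1 - 2 * mu_const \<pi> S0 / max_norm (X_bold \<pi> p S0 A B Kopt) * \<eta>) ^ n
             * (lqr_cost \<pi> p S0 A B Q R K0 - lqr_cost \<pi> p S0 A B Q R Kopt)"
proof
  fix n
  define f where "f = 1 - 2 * mu_const \<pi> S0 / max_norm (X_bold \<pi> p S0 A B Kopt) * \<eta>"
  define C where "C = (\<lambda>K. lqr_cost \<pi> p S0 A B Q R K)"
  define g where "g = gn_step p A B Q R \<eta>"
  have step: "g K \<in> stabilizing p A B \<and> C (g K) - C Kopt \<le> f * (C K - C Kopt) \<and> 0 \<le> f"
    if "K \<in> stabilizing p A B" for K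
    using gn_main[OF p_stoch pi_pos S0_pd Q_pd R_pd Kopt_in that eta_pos eta_le]
    unfolding f_def C_def g_def .
  have "(g ^^ n) K0 \<in> stabilizing p A B \<and> C ((g ^^ n) K0) - C Kopt \<le> f ^ n * (C K0 - C Kopt)"
  proof (induction n)
    case 0 then show ?case using K0_in by simp
  next
    case (Suc n)
    define Kn where "Kn = (g ^^ n) K0"
    have Kn: "Kn \<in> stabilizing p A B" "C Kn - C Kopt \<le> f ^ n * (C K0 - C Kopt)"
      using Suc by (simp_all add: Kn_def)
    have s: "g Kn \<in> stabilizing p A B" "C (g Kn) - C Kopt \<le> f * (C Kn - C Kopt)" "0 \<le> f"
      using step[OF Kn(1)] by auto
    have "f * (C Kn - C Kopt) \<le> f * (f ^ n * (C K0 - C Kopt))"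
      using Kn(2) s(3) by (rule mult_left_mono)
    then have "C (g Kn) - C Kopt \<le> f ^ Suc n * (C K0 - C Kopt)"
      using s(2) by (simp add: mult.assoc)
    then show ?case using s(1) by (simp add: Kn_def)
  qed
  then show "(gn_step p A B Q R \<eta> ^^ n) K0 \<in> stabilizing p A B \<and>
           lqr_cost \<pi> p S0 A B Q R ((gn_step p A B Q R \<eta> ^^ n) K0) - lqr_cost \<pi> p S0 A B Q R Kopt
           \<le> (1 - 2 * mu_const \<pi> S0 / max_norm (X_bold \<pi> p S0 A B Kopt) * \<eta>) ^ n
             * (lqr_cost \<pi> p S0 A B Q R K0 - lqr_cost \<pi> p S0 A B Q R Kopt)"
    unfolding f_def C_def g_def .
qed

end
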